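(* Let $M$ be a finitely generated $\mathbb{Z}$-module and let $z:M\to M$ be an automorphism. Suppose that there is a sequence of integers $r_i\to\infty$ and automorphisms $w_i:M\to M$ satisfying $w_i^{r_i}=z$. Then $z$ has finite order in $\operatorname{Aut} M$. *)

theory Defs
  imports "HOL-Algebra.Algebra"
begin

text \<open>A finitely generated abelian group (= finitely generated Z-module).\<close>
definition fin_gen_comm_group :: "('a, 'b) monoid_scheme \<Rightarrow> bool" where
  "fin_gen_comm_group M \<longleftrightarrow> comm_group M \<and>
     (\<exists>S. finite S \<and> S \<subseteq> carrier M \<and> generate M S = carrier M)"

end

theory Submission
  imports Defs Jordan_Normal_Form.Jordan_Normal_Form_Existence Jordan_Normal_Form.Spectral_Radius
begin

definition band :: "nat \<Rightarrow> 'a::zero mat \<Rightarrow> bool" where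
  "band a A \<longleftrightarrow> (\<forall>i j. i < dim_row A \<longrightarrow> j < dim_col A \<longrightarrow> j < i + a \<longrightarrow> A $$ (i,j) = 0)"

lemma band_mult:
  fixes A B :: "'a::semiring_0 mat"
  assumes A: "A \<in> carrier_mat n n" and B: "B \<in> carrier_mat n n"
    and a: "band a A" and b: "band b B"
  shows "band (a+b) (A * B)"
  unfolding band_def
proof (intro allI impI)
  fix i j assume i: "i < dim_row (A * B)" and j: "j < dim_col (A * B)" and ij: "j < i + (a + b)"
  have "(A * B) $$ (i,j) = (\<Sum>l\<in>{0..<n}. A $$ (i,l) * B $$ (l,j))"
    using i j A B by (auto simp: scalar_prod_def)
  also have "\<dots> = 0"
  proof (rule sum.neutral, intro ballI)
    fix l assume l: "l \<in> {0..<n}"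
    show "A $$ (i,l) * B $$ (l,j) = 0"
    proof (cases "l < i + a")
      case True
      then show ?thesis using a l i A B unfolding band_def by auto
    next
      case False
      then have "j < l + b" using ij by auto
      then show ?thesis using b l j A B unfolding band_def by auto
    qed
  qed
  finally show "(A * B) $$ (i,j) = 0" .
qed

lemma band_one: "band 0 (1\<^sub>m n)" unfolding band_def by auto

lemma band_pow:
  fixes N :: "'a::semiring_1 mat"
  assumes N: "N \<in> carrier_mat n n" and b: "band 1 N"
  shows "band m (N ^\<^sub>m m)"
proof (induct m)
  case 0 then show ?case using N by (simp add: band_one)
next
  case (Suc m)
  have "band (m+1) (N ^\<^sub>m m * N)"
    by (rule band_mult[OF _ N Suc b], use N in auto)
  then show ?case by simp
qed

lemma band_full_zero:
  assumes N: "N \<in> carrier_mat n n" and b: "band n N"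
  shows "N = 0\<^sub>m n n"
  by (rule eq_matI, use N b in \<open>auto simp: band_def\<close>)

lemma upper_tri_mult_diag:
  fixes A B :: "'a::semiring_0 mat"
  assumes A: "A \<in> carrier_mat n n" and B: "B \<in> carrier_mat n n"
    and a: "upper_triangular A" and b: "upper_triangular B" and i: "i < n"
  shows "(A * B) $$ (i,i) = A $$ (i,i) * B $$ (i,i)"
proof -
  have "(A * B) $$ (i,i) = (\<Sum>l\<in>{0..<n}. A $$ (i,l) * B $$ (l,i))"
    using i A B by (auto simp: scalar_prod_def)
  also have "\<dots> = (\<Sum>l\<in>{0..<n}. if l = i then A $$ (i,i) * B $$ (i,i) else 0)"
  proof (rule sum.cong[OF refl])
    fix l assume l: "l \<in> {0..<n}"
    show "A $$ (i,l) * B $$ (l,i) = (if l = i then A $$ (i,i) * B $$ (i,i) else 0)"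
    proof (cases "l < i")
      case True then show ?thesis using upper_triangularD[OF a True] A i by simp
    next
      case False
      show ?thesis
      proof (cases "l = i")
        case False
        with \<open>\<not> l < i\<close> have "i < l" by auto
        then show ?thesis using upper_triangularD[OF b \<open>i<l\<close>] B l by simp
      qed simp
    qed
  qed
  also have "\<dots> = A $$ (i,i) * B $$ (i,i)" using i by simp
  finally show ?thesis .
qed

lemma upper_tri_band: "A \<in> carrier_mat n n \<Longrightarrow> upper_triangular A \<longleftrightarrow> band 0 A"
  unfolding band_def upper_triangular_def by auto

lemma upper_tri_pow:
  fixes B :: "'a::comm_semiring_1 mat"
  assumes B: "B \<in> carrier_mat n n" and ut: "upper_triangular B"
  shows "upper_triangular (B ^\<^sub>m m) \<and> (\<forall>i<n. (B ^\<^sub>m m) $$ (i,i) = (B $$ (i,i)) ^ m)"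
proof (induct m)
  case 0 then show ?case using B by auto
next
  case (Suc m)
  have c: "B ^\<^sub>m m \<in> carrier_mat n n" using B by simp
  have "band (0+0) (B ^\<^sub>m m * B)"
    by (rule band_mult[OF c B], use Suc upper_tri_band[OF c] upper_tri_band[OF B] ut in auto)
  then have "upper_triangular (B ^\<^sub>m Suc m)" using upper_tri_band[OF mult_carrier_mat[OF c B]] by simp
  moreover have "\<forall>i<n. (B ^\<^sub>m Suc m) $$ (i,i) = (B $$ (i,i)) ^ Suc m"
    using upper_tri_mult_diag[OF c B] Suc ut by (auto simp: mult.commute)
  ultimately show ?case by blast
qed

lemma poly_prod_lin_zero:
  "poly (\<Prod>e\<leftarrow>es. [:- f e, 1:]) (x::'a::idom) = 0 \<longleftrightarrow> x \<in> f ` set es"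
  by (induct es) auto

lemma schur_pow:
  fixes A :: "complex mat"
  assumes A: "A \<in> carrier_mat n n"
  obtains es where "length es = n" "char_poly A = (\<Prod>e\<leftarrow>es. [:- e, 1:])"
    "\<And>m. char_poly (A ^\<^sub>m m) = (\<Prod>e\<leftarrow>es. [:- (e ^ m), 1:])"
    "\<And>m. (\<forall>e\<in>set es. e ^ m = 1) \<Longrightarrow> (A ^\<^sub>m m - 1\<^sub>m n) ^\<^sub>m n = 0\<^sub>m n n"
proof -
  obtain es where cp: "char_poly A = (\<Prod>a\<leftarrow>es. [:- a, 1:])" and len: "length es = n"
    using char_poly_factorized[OF A] by blast
  obtain B P Q where sd: "schur_decomposition A es = (B,P,Q)" by (cases "schur_decomposition A es") auto
  from schur_decomposition[OF A cp sd]
  have wit: "similar_mat_wit A B P Q" and ut: "upper_triangular B" and dg: "diag_mat B = es" by auto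
  from wit A have B: "B \<in> carrier_mat n n" and P: "P \<in> carrier_mat n n" and Q: "Q \<in> carrier_mat n n"
    and PQ: "P * Q = 1\<^sub>m n" and AB: "A = P * B * Q"
    unfolding similar_mat_wit_def Let_def by auto
  have es_nth: "\<And>i. i < n \<Longrightarrow> es ! i = B $$ (i,i)" using dg B unfolding diag_mat_def by auto
  have cpm: "char_poly (A ^\<^sub>m m) = (\<Prod>e\<leftarrow>es. [:- (e ^ m), 1:])" for m
  proof -
    have w: "similar_mat_wit (A ^\<^sub>m m) (B ^\<^sub>m m) P Q" by (rule similar_mat_wit_pow[OF wit])
    then have "char_poly (A ^\<^sub>m m) = char_poly (B ^\<^sub>m m)"
      by (intro char_poly_similar) (auto simp: similar_mat_def)
    also have "\<dots> = (\<Prod>a\<leftarrow>diag_mat (B ^\<^sub>m m). [:- a, 1:])"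
      using upper_tri_pow[OF B ut, of m] B by (intro char_poly_upper_triangular[of _ n]) auto
    also have "diag_mat (B ^\<^sub>m m) = map (\<lambda>e. e ^ m) es"
      using upper_tri_pow[OF B ut, of m] B len es_nth unfolding diag_mat_def
      by (intro nth_equalityI) auto
    finally show ?thesis by (simp add: comp_def)
  qed
  have uni: "(A ^\<^sub>m m - 1\<^sub>m n) ^\<^sub>m n = 0\<^sub>m n n" if all: "\<forall>e\<in>set es. e ^ m = 1" for m
  proof -
    have Bm: "B ^\<^sub>m m \<in> carrier_mat n n" using B by simp
    have Am: "A ^\<^sub>m m = P * B ^\<^sub>m m * Q" by (rule similar_mat_wit_pow_id[OF wit])
    have "A ^\<^sub>m m - 1\<^sub>m n = P * (B ^\<^sub>m m - 1\<^sub>m n) * Q"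
    proof -
      have "P * (B ^\<^sub>m m - 1\<^sub>m n) = P * B ^\<^sub>m m - P"
        using P Bm by (simp add: mult_minus_distrib_mat[OF P Bm one_carrier_mat])
      then have "P * (B ^\<^sub>m m - 1\<^sub>m n) * Q = (P * B ^\<^sub>m m - P) * Q" by simp
      also have "\<dots> = P * B ^\<^sub>m m * Q - P * Q"
        by (rule minus_mult_distrib_mat, use P Bm Q in auto)
      finally show ?thesis using Am PQ by simp
    qed
    then have w: "similar_mat_wit (A ^\<^sub>m m - 1\<^sub>m n) (B ^\<^sub>m m - 1\<^sub>m n) P Q"
      using wit A B P Q Bm unfolding similar_mat_wit_def Let_def by auto
    have "band 1 (B ^\<^sub>m m - 1\<^sub>m n)"
      unfolding band_def
    proof (intro allI impI)
      fix i j assume i: "i < dim_row (B ^\<^sub>m m - 1\<^sub>m n)" and j: "j < dim_col (B ^\<^sub>m m - 1\<^sub>m n)"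
        and ij: "j < i + 1"
      show "(B ^\<^sub>m m - 1\<^sub>m n) $$ (i,j) = 0"
      proof (cases "j = i")
        case True
        then show ?thesis using upper_tri_pow[OF B ut, of m] i B es_nth[of i] all len
          by (auto simp: set_conv_nth)
      next
        case False
        then have "j < i" using ij by auto
        then show ?thesis using upper_tri_pow[OF B ut, of m] i j B by auto
      qed
    qed
    then have "band n ((B ^\<^sub>m m - 1\<^sub>m n) ^\<^sub>m n)" by (rule band_pow[rotated], use Bm in auto)
    then have z: "(B ^\<^sub>m m - 1\<^sub>m n) ^\<^sub>m n = 0\<^sub>m n n" by (intro band_full_zero, use Bm in auto)
    show ?thesis using similar_mat_wit_pow_id[OF w, of n] z P Q by simp
  qed
  show ?thesis by (rule that[OF len cp cpm uni])
qed


lemma eigenvalue_smult: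
  fixes A :: "complex mat"
  assumes A: "A \<in> carrier_mat n n" and ev: "eigenvalue A mu"
  shows "eigenvalue (c \<cdot>\<^sub>m A) (c * mu)"
proof -
  obtain v where v: "eigenvector A v mu" using ev unfolding eigenvalue_def by blast
  then have vc: "v \<in> carrier_vec n" and v0: "v \<noteq> 0\<^sub>v n" and Av: "A *\<^sub>v v = mu \<cdot>\<^sub>v v"
    using A unfolding eigenvector_def by auto
  have "(c \<cdot>\<^sub>m A) *\<^sub>v v = (c * mu) \<cdot>\<^sub>v v"
  proof (rule eq_vecI)
    fix i assume i: "i < dim_vec ((c * mu) \<cdot>\<^sub>v v)"
    then have i': "i < n" using vc by auto
    have "((c \<cdot>\<^sub>m A) *\<^sub>v v) $ i = c * ((A *\<^sub>v v) $ i)"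
      using i' A vc by (auto simp: scalar_prod_def sum_distrib_left mult.assoc)
    also have "\<dots> = ((c * mu) \<cdot>\<^sub>v v) $ i" using Av i' vc by simp
    finally show "((c \<cdot>\<^sub>m A) *\<^sub>v v) $ i = ((c * mu) \<cdot>\<^sub>v v) $ i" .
  qed (use A vc in auto)
  then show ?thesis using vc v0 A unfolding eigenvalue_def eigenvector_def by auto
qed

lemma eigenvalue_smult_iff:
  fixes A :: "complex mat"
  assumes A: "A \<in> carrier_mat n n" and c: "c \<noteq> 0"
  shows "eigenvalue (c \<cdot>\<^sub>m A) e \<longleftrightarrow> eigenvalue A (e / c)"
proof
  assume "eigenvalue A (e / c)"
  from eigenvalue_smult[OF A this, of c] c show "eigenvalue (c \<cdot>\<^sub>m A) e" by simp
next
  assume "eigenvalue (c \<cdot>\<^sub>m A) e"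
  from eigenvalue_smult[OF _ this, of n "1/c"] A c
  have "eigenvalue ((1/c) \<cdot>\<^sub>m (c \<cdot>\<^sub>m A)) (e / c)" by simp
  moreover have "(1/c) \<cdot>\<^sub>m (c \<cdot>\<^sub>m A) = A" by (rule eq_matI) (use A c in auto)
  ultimately show "eigenvalue A (e / c)" by simp
qed

lemma coeff_prod_lin_bound:
  fixes es :: "complex list"
  assumes "\<forall>e\<in>set es. norm e \<le> R" and "R \<ge> 0"
  shows "norm (coeff (\<Prod>e\<leftarrow>es. [:- e, 1:]) j) \<le> (1 + R) ^ length es"
  using assms
proof (induct es arbitrary: j)
  case Nil then show ?case by (cases j) auto
next
  case (Cons e es)
  let ?p = "\<Prod>e\<leftarrow>es. [:- e, 1:]"
  have IH: "\<And>j. norm (coeff ?p j) \<le> (1 + R) ^ length es" using Cons by auto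
  have "[:- e, 1:] * ?p = smult (- e) ?p + pCons 0 ?p" by (simp add: mult_poly_add_left)
  then have eq: "coeff ([:- e, 1:] * ?p) j = - e * coeff ?p j + (case j of 0 \<Rightarrow> 0 | Suc i \<Rightarrow> coeff ?p i)"
    by (simp add: coeff_pCons split: nat.split)
  have b2: "norm (case j of 0 \<Rightarrow> 0 | Suc i \<Rightarrow> coeff ?p i) \<le> (1 + R) ^ length es"
    using IH by (cases j) (auto intro: order_trans[OF _ zero_le_power] simp: Cons.prems)
  have "norm (- e * coeff ?p j) \<le> R * (1 + R) ^ length es"
    using IH[of j] Cons.prems by (auto simp: norm_mult intro: mult_mono)
  moreover have "norm (- e * coeff ?p j + (case j of 0 \<Rightarrow> 0 | Suc i \<Rightarrow> coeff ?p i)) \<le>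
      norm (- e * coeff ?p j) + norm (case j of 0 \<Rightarrow> 0 | Suc i \<Rightarrow> coeff ?p i)" by (rule norm_triangle_ineq)
  ultimately have "norm (coeff ([:- e, 1:] * ?p) j) \<le> R * (1 + R) ^ length es + (1 + R) ^ length es"
    unfolding eq using b2 by linarith
  then show ?case by (simp add: algebra_simps)
qed

lemma finite_bounded_int_polys:
  "finite {q :: int poly. degree q \<le> k \<and> (\<forall>j. \<bar>coeff q j\<bar> \<le> C)}"
proof -
  let ?S = "{q :: int poly. degree q \<le> k \<and> (\<forall>j. \<bar>coeff q j\<bar> \<le> C)}"
  let ?f = "\<lambda>q::int poly. map (coeff q) [0..<Suc k]"
  have inj: "inj_on ?f ?S"
  proof (rule inj_onI)
    fix p q assume p: "p \<in> ?S" and q: "q \<in> ?S" and eq: "?f p = ?f q"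
    show "p = q"
    proof (rule poly_eqI)
      fix j
      show "coeff p j = coeff q j"
      proof (cases "j \<le> k")
        case True
        from eq have "?f p ! j = ?f q ! j" by (rule arg_cong)
        moreover have "?f p ! j = coeff p j" "?f q ! j = coeff q j"
          using True by (subst nth_map, auto simp del: upt_Suc)+
        ultimately show ?thesis by simp
      next
        case False
        then have "coeff p j = 0" "coeff q j = 0" using p q by (auto intro!: coeff_eq_0)
        then show ?thesis by simp
      qed
    qed
  qed
  have "?f ` ?S \<subseteq> {xs. set xs \<subseteq> {-C..C} \<and> length xs = Suc k}"
    by (auto simp del: upt_Suc simp: abs_le_iff) (metis minus_le_iff)
  moreover have "finite {xs. set xs \<subseteq> {-C..C} \<and> length xs = Suc k}"
    by (rule finite_lists_length_eq) simp
  ultimately have "finite (?f ` ?S)" by (rule finite_subset)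
  then show ?thesis using inj by (simp add: finite_image_iff)
qed

definition intmat :: "nat \<Rightarrow> nat \<Rightarrow> complex mat \<Rightarrow> bool" where
  "intmat k D A \<longleftrightarrow> A \<in> carrier_mat k k \<and> (\<forall>i<k. \<forall>j<k. of_nat D * A $$ (i,j) \<in> \<int>)"

lemma intmat_obtain:
  assumes "intmat k D A"
  obtains Mi :: "int mat" where "Mi \<in> carrier_mat k k" "of_nat D \<cdot>\<^sub>m A = map_mat of_int Mi"
proof -
  define Mi where "Mi = mat k k (\<lambda>ij. SOME m::int. of_nat D * A $$ ij = of_int m)"
  have "of_nat D \<cdot>\<^sub>m A = map_mat of_int Mi"
  proof (rule eq_matI)
    fix i j assume i: "i < dim_row (map_mat of_int Mi :: complex mat)" and j: "j < dim_col (map_mat of_int Mi :: complex mat)"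
    then have ik: "i < k" "j < k" by (auto simp: Mi_def)
    have "of_nat D * A $$ (i,j) \<in> \<int>" using assms ik unfolding intmat_def by auto
    then have ex: "\<exists>m::int. of_nat D * A $$ (i,j) = of_int m" by (auto elim: Ints_cases)
    show "(of_nat D \<cdot>\<^sub>m A) $$ (i, j) = map_mat of_int Mi $$ (i, j)"
      using someI_ex[OF ex] ik assms unfolding Mi_def intmat_def by auto
  qed (use assms in \<open>auto simp: Mi_def intmat_def\<close>)
  then show ?thesis using that[of Mi] by (auto simp: Mi_def)
qed

lemma finite_ev_bounded:
  assumes D: "D > 0"
  shows "finite {mu. \<exists>A. A \<in> S \<and> intmat k D A \<and> eigenvalue A mu \<and> (\<forall>nu. eigenvalue A nu \<longrightarrow> norm nu \<le> R)}"
proof -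
  define R' where "R' = max R 0"
  define C where "C = (1 + real D * R') ^ k"
  define P where "P = {q :: int poly. degree q \<le> k \<and> (\<forall>j. \<bar>coeff q j\<bar> \<le> \<lceil>C\<rceil>)}"
  have finP: "finite P" unfolding P_def by (rule finite_bounded_int_polys)
  define Rts where "Rts = (\<Union>q\<in>P - {0}. {x::complex. poly (of_int_poly q) x = 0})"
  have finR: "finite Rts" unfolding Rts_def
  proof (intro finite_UN_I)
    show "finite (P - {0})" using finP by auto
    fix q :: "int poly" assume "q \<in> P - {0}"
    then have "of_int_poly q \<noteq> (0 :: complex poly)" by auto
    then show "finite {x::complex. poly (of_int_poly q) x = 0}" by (rule poly_roots_finite)
  qed
  have "{mu. \<exists>A. A \<in> S \<and> intmat k D A \<and> eigenvalue A mu \<and> (\<forall>nu. eigenvalue A nu \<longrightarrow> norm nu \<le> R)}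
        \<subseteq> (\<lambda>x. x / of_nat D) ` Rts"
  proof
    fix mu assume "mu \<in> {mu. \<exists>A. A \<in> S \<and> intmat k D A \<and> eigenvalue A mu \<and> (\<forall>nu. eigenvalue A nu \<longrightarrow> norm nu \<le> R)}"
    then obtain A where iA: "intmat k D A" and ev: "eigenvalue A mu"
      and bd: "\<And>nu. eigenvalue A nu \<Longrightarrow> norm nu \<le> R" by auto
    have A: "A \<in> carrier_mat k k" using iA unfolding intmat_def by auto
    obtain Mi where Mi: "Mi \<in> carrier_mat k k" and DA: "of_nat D \<cdot>\<^sub>m A = map_mat of_int Mi"
      using intmat_obtain[OF iA] by blast
    define q where "q = char_poly Mi"
    have DAc: "of_nat D \<cdot>\<^sub>m A \<in> carrier_mat k k" using A by simp
    have cpq: "char_poly (of_nat D \<cdot>\<^sub>m A) = of_int_poly q"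
      unfolding q_def DA using of_int_hom.char_poly_hom[OF Mi] by simp
    have Dne: "(of_nat D :: complex) \<noteq> 0" using D by simp
    obtain es where cp: "char_poly (of_nat D \<cdot>\<^sub>m A) = (\<Prod>a\<leftarrow>es. [:- a, 1:])" and len: "length es = k"
      using char_poly_factorized[OF DAc] by blast
    have esb: "\<forall>e\<in>set es. norm e \<le> real D * R'"
    proof
      fix e assume e: "e \<in> set es"
      have "poly (char_poly (of_nat D \<cdot>\<^sub>m A)) e = 0" unfolding cp using e poly_prod_lin_zero[of id es e] by simp
      then have "eigenvalue (of_nat D \<cdot>\<^sub>m A) e" using eigenvalue_root_char_poly[OF DAc] by simp
      then have "eigenvalue A (e / of_nat D)" using eigenvalue_smult_iff[OF A Dne] by simp
      then have "norm (e / of_nat D) \<le> R" by (rule bd)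
      then have "norm e \<le> real D * R" using D by (simp add: norm_divide field_simps)
      then show "norm e \<le> real D * R'" unfolding R'_def
        by (meson D max.cobounded1 mult_left_mono of_nat_0_le_iff order_trans)
    qed
    have qdeg: "degree q = k" and qmon: "coeff q k = 1" using degree_monic_char_poly[OF Mi] unfolding q_def by auto
    have "q \<in> P"
      unfolding P_def
    proof (intro CollectI conjI allI)
      show "degree q \<le> k" using qdeg by simp
      fix j
      have "norm (coeff (of_int_poly q :: complex poly) j) \<le> (1 + real D * R') ^ k"
        unfolding cpq[symmetric] cp using coeff_prod_lin_bound[OF esb] len D unfolding R'_def by auto
      then have "\<bar>real_of_int (coeff q j)\<bar> \<le> C" unfolding C_def by (simp add: coeff_map_poly)
      then show "\<bar>coeff q j\<bar> \<le> \<lceil>C\<rceil>" by linarith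
    qed
    moreover have "q \<noteq> 0" using qmon by auto
    moreover have "poly (of_int_poly q) (of_nat D * mu) = (0::complex)"
    proof -
      have "eigenvalue (of_nat D \<cdot>\<^sub>m A) (of_nat D * mu)" by (rule eigenvalue_smult[OF A ev])
      then show ?thesis using eigenvalue_root_char_poly[OF DAc] cpq by simp
    qed
    ultimately have "of_nat D * mu \<in> Rts" unfolding Rts_def by auto
    moreover have "mu = (of_nat D * mu) / of_nat D" using Dne by simp
    ultimately show "mu \<in> (\<lambda>x. x / of_nat D) ` Rts" by blast
  qed
  moreover have "finite ((\<lambda>x. x / of_nat D) ` Rts)" using finR by simp
  ultimately show ?thesis by (rule finite_subset)
qed


lemma massoc:
  fixes A B C :: "'a::semiring_0 mat"
  assumes "A \<in> carrier_mat n n" "B \<in> carrier_mat n n" "C \<in> carrier_mat n n"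
  shows "A * B * C = A * (B * C)"
  using assms by (intro assoc_mult_mat[of _ n n _ n _ n]) auto

lemma pow_mat_add:
  fixes A :: "'a::semiring_1 mat"
  assumes A: "A \<in> carrier_mat n n"
  shows "A ^\<^sub>m (a + b) = A ^\<^sub>m a * A ^\<^sub>m b"
proof (induct b)
  case 0 then show ?case using A by simp
next
  case (Suc b)
  have "A ^\<^sub>m (a + Suc b) = (A ^\<^sub>m a * A ^\<^sub>m b) * A" using Suc by simp
  also have "\<dots> = A ^\<^sub>m a * (A ^\<^sub>m b * A)" using A by (intro assoc_mult_mat[of _ n n _ n _ n]) auto
  finally show ?case by simp
qed

lemma pow_mat_mult:
  fixes A :: "'a::semiring_1 mat"
  assumes A: "A \<in> carrier_mat n n"
  shows "A ^\<^sub>m (a * b) = (A ^\<^sub>m a) ^\<^sub>m b"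
proof (induct b)
  case 0 then show ?case using A by simp
next
  case (Suc b)
  have "A ^\<^sub>m (a * Suc b) = A ^\<^sub>m (a * b + a)" by (simp add: add.commute)
  also have "\<dots> = A ^\<^sub>m (a * b) * A ^\<^sub>m a" by (rule pow_mat_add[OF A])
  finally show ?case using Suc by simp
qed

lemma pow_mat_comm:
  fixes A :: "'a::semiring_1 mat"
  assumes A: "A \<in> carrier_mat n n"
  shows "A ^\<^sub>m a * A = A * A ^\<^sub>m a"
  using pow_mat_add[OF A, of a 1] pow_mat_add[OF A, of 1 a] A by (simp add: add.commute)

lemma comm_pow_mat:
  fixes A B :: "'a::semiring_1 mat"
  assumes A: "A \<in> carrier_mat n n" and B: "B \<in> carrier_mat n n" and c: "A * B = B * A"
  shows "A ^\<^sub>m m * B = B * A ^\<^sub>m m"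
proof (induct m)
  case 0 then show ?case using A B by simp
next
  case (Suc m)
  have Am: "A ^\<^sub>m m \<in> carrier_mat n n" using A by simp
  have "A ^\<^sub>m Suc m * B = A ^\<^sub>m m * (A * B)" using massoc[OF Am A B] by simp
  also have "\<dots> = (A ^\<^sub>m m * B) * A" using massoc[OF Am B A] c by simp
  also have "\<dots> = B * A ^\<^sub>m m * A" using Suc by simp
  also have "\<dots> = B * A ^\<^sub>m Suc m" using massoc[OF B Am A] by simp
  finally show ?case .
qed

lemma mult_pow_comm:
  fixes A B :: "'a::semiring_1 mat"
  assumes A: "A \<in> carrier_mat n n" and B: "B \<in> carrier_mat n n" and c: "A * B = B * A"
  shows "(A * B) ^\<^sub>m m = A ^\<^sub>m m * B ^\<^sub>m m"
proof (induct m)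
  case 0 then show ?case using A B by simp
next
  case (Suc m)
  have Am: "A ^\<^sub>m m \<in> carrier_mat n n" and Bm: "B ^\<^sub>m m \<in> carrier_mat n n" using A B by auto
  have cm: "B ^\<^sub>m m * A = A * B ^\<^sub>m m" using comm_pow_mat[OF B A c[symmetric]] .
  have "(A * B) ^\<^sub>m Suc m = A ^\<^sub>m m * B ^\<^sub>m m * (A * B)" using Suc by simp
  also have "\<dots> = A ^\<^sub>m m * (B ^\<^sub>m m * A) * B"
    using massoc[OF Am Bm mult_carrier_mat[OF A B]] massoc[OF Bm A B] massoc[OF Am mult_carrier_mat[OF Bm A] B] by simp
  also have "\<dots> = A ^\<^sub>m m * (A * B ^\<^sub>m m) * B" using cm by simp
  also have "\<dots> = (A ^\<^sub>m m * A) * (B ^\<^sub>m m * B)"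
    using massoc[OF Am mult_carrier_mat[OF A Bm] B] massoc[OF Am A Bm] massoc[OF mult_carrier_mat[OF Am A] Bm B] by simp
  finally show ?case by simp
qed

lemma alg_S:
  fixes N :: "'a::comm_ring_1 mat"
  assumes N: "N \<in> carrier_mat n n" and nil: "N ^\<^sub>m Suc j = 0\<^sub>m n n"
  shows "\<exists>S \<in> carrier_mat n n. (1\<^sub>m n + N) ^\<^sub>m r - 1\<^sub>m n = N * S \<and> N * S = S * N \<and>
           N ^\<^sub>m j * S = of_nat r \<cdot>\<^sub>m N ^\<^sub>m j"
proof (induct r)
  case 0
  have Nj: "N ^\<^sub>m j \<in> carrier_mat n n" using N by simp
  have "(1\<^sub>m n + N) ^\<^sub>m 0 - 1\<^sub>m n = N * 0\<^sub>m n n" using N by (intro eq_matI) auto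
  moreover have "N * 0\<^sub>m n n = 0\<^sub>m n n * N" using N by (intro eq_matI) auto
  moreover have "N ^\<^sub>m j * 0\<^sub>m n n = of_nat 0 \<cdot>\<^sub>m N ^\<^sub>m j" using Nj by (intro eq_matI) auto
  ultimately show ?case by (intro bexI[of _ "0\<^sub>m n n"]) auto
next
  case (Suc r)
  then obtain S where S: "S \<in> carrier_mat n n" and e1: "(1\<^sub>m n + N) ^\<^sub>m r - 1\<^sub>m n = N * S"
    and e2: "N * S = S * N" and e3: "N ^\<^sub>m j * S = of_nat r \<cdot>\<^sub>m N ^\<^sub>m j" by blast
  define V where "V = 1\<^sub>m n + N"
  have V: "V \<in> carrier_mat n n" using N by (simp add: V_def)
  have Vr: "V ^\<^sub>m r \<in> carrier_mat n n" using V by simp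
  have Nj: "N ^\<^sub>m j \<in> carrier_mat n n" using N by simp
  define S' where "S' = S * V + 1\<^sub>m n"
  have S': "S' \<in> carrier_mat n n" using S V by (simp add: S'_def)
  have NV: "N * V = V * N" using mult_add_distrib_mat[OF N one_carrier_mat N] add_mult_distrib_mat[OF one_carrier_mat N N] N
    by (simp add: V_def)
  have VrS: "V ^\<^sub>m r = N * S + 1\<^sub>m n"
  proof -
    have "V ^\<^sub>m r = (V ^\<^sub>m r - 1\<^sub>m n) + 1\<^sub>m n" by (rule eq_matI) (use Vr in auto)
    then show ?thesis using e1[folded V_def] by simp
  qed
  have NS: "N * S \<in> carrier_mat n n" using N S by simp
  have NSV: "N * S * V \<in> carrier_mat n n" using NS V by simp
  have "V ^\<^sub>m Suc r - 1\<^sub>m n = N * S'"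
  proof -
    have "V ^\<^sub>m Suc r = (N * S + 1\<^sub>m n) * V" using VrS by simp
    also have "\<dots> = N * S * V + V" using add_mult_distrib_mat[OF NS one_carrier_mat V] V by simp
    finally have h: "V ^\<^sub>m Suc r = N * S * V + (N + 1\<^sub>m n)" using comm_add_mat[OF one_carrier_mat N] by (simp add: V_def)
    have "V ^\<^sub>m Suc r - 1\<^sub>m n = N * S * V + N" unfolding h by (rule eq_matI) (use NSV N in auto)
    also have "\<dots> = N * S'" using mult_add_distrib_mat[OF N mult_carrier_mat[OF S V] one_carrier_mat] massoc[OF N S V] N
      by (simp add: S'_def)
    finally show ?thesis .
  qed
  moreover have "N * S' = S' * N"
  proof -
    have "N * S' = N * S * V + N" using mult_add_distrib_mat[OF N mult_carrier_mat[OF S V] one_carrier_mat] massoc[OF N S V] N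
      by (simp add: S'_def)
    also have "\<dots> = S * N * V + N" using e2 by simp
    also have "\<dots> = S * V * N + N" using massoc[OF S N V] massoc[OF S V N] NV by simp
    also have "\<dots> = S' * N" using add_mult_distrib_mat[OF mult_carrier_mat[OF S V] one_carrier_mat N] N
      by (simp add: S'_def)
    finally show ?thesis .
  qed
  moreover have "N ^\<^sub>m j * S' = of_nat (Suc r) \<cdot>\<^sub>m N ^\<^sub>m j"
  proof -
    have NjX: "N ^\<^sub>m j * N = 0\<^sub>m n n" using nil by simp
    have NjV: "N ^\<^sub>m j * V = N ^\<^sub>m j" using mult_add_distrib_mat[OF Nj one_carrier_mat N] NjX Nj right_mult_one_mat[OF Nj]
      by (simp add: V_def)
    have "N ^\<^sub>m j * S' = N ^\<^sub>m j * S * V + N ^\<^sub>m j"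
      using mult_add_distrib_mat[OF Nj mult_carrier_mat[OF S V] one_carrier_mat] massoc[OF Nj S V] Nj right_mult_one_mat[OF Nj]
      by (simp add: S'_def)
    also have "\<dots> = (of_nat r \<cdot>\<^sub>m N ^\<^sub>m j) * V + N ^\<^sub>m j" using e3 by simp
    also have "\<dots> = of_nat r \<cdot>\<^sub>m N ^\<^sub>m j + N ^\<^sub>m j" using NjV mult_smult_assoc_mat[OF Nj V] by simp
    also have "\<dots> = of_nat (Suc r) \<cdot>\<^sub>m N ^\<^sub>m j" using Nj by (intro eq_matI) (auto simp: algebra_simps)
    finally show ?thesis .
  qed
  ultimately show ?case using S' unfolding V_def by blast
qed

lemma unipotent_pow_formula:
  fixes N :: "'a::comm_ring_1 mat"
  assumes N: "N \<in> carrier_mat n n" and nil: "N ^\<^sub>m Suc j = 0\<^sub>m n n"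
  shows "((1\<^sub>m n + N) ^\<^sub>m r - 1\<^sub>m n) ^\<^sub>m j = (of_nat r ^ j) \<cdot>\<^sub>m N ^\<^sub>m j"
proof -
  obtain S where S: "S \<in> carrier_mat n n" and e1: "(1\<^sub>m n + N) ^\<^sub>m r - 1\<^sub>m n = N * S"
    and e2: "N * S = S * N" and e3: "N ^\<^sub>m j * S = of_nat r \<cdot>\<^sub>m N ^\<^sub>m j"
    using alg_S[OF N nil] by blast
  have Nj: "N ^\<^sub>m j \<in> carrier_mat n n" using N by simp
  have gen: "N ^\<^sub>m j * S ^\<^sub>m m = (of_nat r ^ m) \<cdot>\<^sub>m N ^\<^sub>m j" for m
  proof (induct m)
    case 0
    have "N ^\<^sub>m j * S ^\<^sub>m 0 = N ^\<^sub>m j" using Nj S right_mult_one_mat[OF Nj] by simp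
    moreover have "(of_nat r ^ 0) \<cdot>\<^sub>m N ^\<^sub>m j = N ^\<^sub>m j" by (rule eq_matI) (use Nj in auto)
    ultimately show ?case by simp
  next
    case (Suc m)
    have Sm: "S ^\<^sub>m m \<in> carrier_mat n n" using S by simp
    have "N ^\<^sub>m j * S ^\<^sub>m Suc m = (N ^\<^sub>m j * S ^\<^sub>m m) * S" using massoc[OF Nj Sm S] by simp
    also have "\<dots> = (of_nat r ^ m) \<cdot>\<^sub>m (N ^\<^sub>m j * S)" using Suc Nj S by (simp add: mult_smult_assoc_mat[of _ n n])
    also have "\<dots> = (of_nat r ^ Suc m) \<cdot>\<^sub>m N ^\<^sub>m j" using e3 Nj by (intro eq_matI) (auto simp: algebra_simps)
    finally show ?case .
  qed
  have "((1\<^sub>m n + N) ^\<^sub>m r - 1\<^sub>m n) ^\<^sub>m j = N ^\<^sub>m j * S ^\<^sub>m j"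
    unfolding e1 by (rule mult_pow_comm[OF N S e2])
  then show ?thesis using gen by simp
qed


definition isint :: "complex mat \<Rightarrow> bool" where
  "isint A \<longleftrightarrow> (\<forall>i<dim_row A. \<forall>j<dim_col A. A $$ (i,j) \<in> \<int>)"

lemma isint_mult:
  assumes A: "A \<in> carrier_mat n n" and B: "B \<in> carrier_mat n n" and "isint A" "isint B"
  shows "isint (A * B)"
  unfolding isint_def
proof (intro allI impI)
  fix i j assume i: "i < dim_row (A * B)" and j: "j < dim_col (A * B)"
  have "(A * B) $$ (i,j) = (\<Sum>l\<in>{0..<n}. A $$ (i,l) * B $$ (l,j))"
    using i j A B by (auto simp: scalar_prod_def)
  also have "\<dots> \<in> \<int>"
    using assms i j A B unfolding isint_def by (intro Ints_sum Ints_mult) auto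
  finally show "(A * B) $$ (i,j) \<in> \<int>" .
qed

lemma isint_pow:
  assumes A: "A \<in> carrier_mat n n" and "isint A"
  shows "isint (A ^\<^sub>m m)"
proof (induct m)
  case 0 then show ?case using A by (auto simp: isint_def)
next
  case (Suc m) then show ?case using isint_mult[OF _ A _ \<open>isint A\<close>, of "A ^\<^sub>m m"] A by simp
qed

lemma smult_pow_mat:
  fixes A :: "'a::comm_ring_1 mat"
  assumes A: "A \<in> carrier_mat n n"
  shows "(c \<cdot>\<^sub>m A) ^\<^sub>m m = (c ^ m) \<cdot>\<^sub>m (A ^\<^sub>m m)"
proof (induct m)
  case 0 then show ?case using A by (auto intro!: eq_matI)
next
  case (Suc m)
  have Am: "A ^\<^sub>m m \<in> carrier_mat n n" using A by simp
  have "(c \<cdot>\<^sub>m A) ^\<^sub>m Suc m = ((c ^ m) \<cdot>\<^sub>m (A ^\<^sub>m m)) * (c \<cdot>\<^sub>m A)" using Suc by simp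
  also have "\<dots> = (c ^ m) \<cdot>\<^sub>m (A ^\<^sub>m m * (c \<cdot>\<^sub>m A))" by (rule mult_smult_assoc_mat[OF Am smult_carrier_mat[OF A]])
  also have "\<dots> = (c ^ m) \<cdot>\<^sub>m (c \<cdot>\<^sub>m (A ^\<^sub>m m * A))" using mult_smult_distrib[OF Am A] by simp
  also have "\<dots> = (c ^ Suc m) \<cdot>\<^sub>m (A ^\<^sub>m Suc m)" by (rule eq_matI) (use Am A in auto)
  finally show ?case .
qed

lemma Ints_nonzero_norm_ge1:
  fixes x :: complex
  assumes "x \<in> \<int>" "x \<noteq> 0"
  shows "norm x \<ge> 1"
proof -
  obtain m :: int where x: "x = of_int m" using assms(1) by (auto elim: Ints_cases)
  then have "m \<noteq> 0" using assms(2) by auto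
  have "norm x = \<bar>real_of_int m\<bar>" unfolding x by (simp only: norm_of_int)
  with \<open>m \<noteq> 0\<close> show ?thesis by linarith
qed

lemma pow_one_mat: "(1\<^sub>m k :: 'a::semiring_1 mat) ^\<^sub>m r = 1\<^sub>m k"
  by (induct r) auto

lemma unipotent_root_trivial:
  fixes U :: "complex mat"
  assumes D: "D > 0" and U: "U \<in> carrier_mat k k"
  shows "\<exists>B. \<forall>N r. N \<in> carrier_mat k k \<longrightarrow> N ^\<^sub>m k = 0\<^sub>m k k \<longrightarrow> isint (of_nat D \<cdot>\<^sub>m N) \<longrightarrow>
            (1\<^sub>m k + N) ^\<^sub>m r = U \<longrightarrow> r > B \<longrightarrow> N = 0\<^sub>m k k"
proof -
  define T where "T = (\<lambda>(j,a,b). norm (((U - 1\<^sub>m k) ^\<^sub>m j) $$ (a,b))) ` ({..k} \<times> {..<k} \<times> {..<k})"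
  define Cst where "Cst = Max (insert 0 T)"
  have finT: "finite T" unfolding T_def by auto
  have Cst_ge: "norm (((U - 1\<^sub>m k) ^\<^sub>m j) $$ (a,b)) \<le> Cst" if "j \<le> k" "a < k" "b < k" for j a b
  proof -
    have "norm (((U - 1\<^sub>m k) ^\<^sub>m j) $$ (a,b)) \<in> T"
      unfolding T_def using that by (intro image_eqI[of _ _ "(j,a,b)"]) auto
    then show ?thesis unfolding Cst_def using finT by (intro Max_ge) auto
  qed
  have Cst0: "Cst \<ge> 0" unfolding Cst_def using finT by (intro Max_ge) auto
  define B where "B = nat \<lceil>real D * (Cst + 1)\<rceil>"
  show ?thesis
  proof (intro exI[of _ B] allI impI)
    fix N r
    assume N: "N \<in> carrier_mat k k" and nil: "N ^\<^sub>m k = 0\<^sub>m k k" and int: "isint (of_nat D \<cdot>\<^sub>m N)"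
      and Ur: "(1\<^sub>m k + N) ^\<^sub>m r = U" and rB: "r > B"
    show "N = 0\<^sub>m k k"
    proof (rule ccontr)
      assume N0: "N \<noteq> 0\<^sub>m k k"
      have k0: "k > 0"
      proof (rule ccontr)
        assume "\<not> k > 0"
        then have "k = 0" by simp
        then have "N = 0\<^sub>m k k" using N by (intro eq_matI) auto
        then show False using N0 by simp
      qed
      define P where "P = (\<lambda>j. N ^\<^sub>m j = 0\<^sub>m k k)"
      have Pk: "P k" using nil unfolding P_def .
      define j1 where "j1 = (LEAST j. P j)"
      have Pj1: "P j1" unfolding j1_def by (rule LeastI[of P k, OF Pk])
      have j1k: "j1 \<le> k" unfolding j1_def by (rule Least_le[of P k, OF Pk])
      have nP0: "\<not> P 0"
      proof
        assume "P 0"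
        then have "1\<^sub>m k = (0\<^sub>m k k :: complex mat)" using N unfolding P_def by simp
        then have "(1\<^sub>m k :: complex mat) $$ (0,0) = 0\<^sub>m k k $$ (0,0)" by simp
        then show False using k0 by simp
      qed
      have nP1: "\<not> P 1"
      proof
        assume "P 1"
        then have "N = 0\<^sub>m k k" using N unfolding P_def by simp
        then show False using N0 by simp
      qed
      have j1_ge2: "j1 \<ge> 2" using Pj1 nP0 nP1 by (cases j1; cases "j1 - 1") auto
      define j0 where "j0 = j1 - 1"
      have j0: "j0 \<ge> 1" "j0 \<le> k" "Suc j0 = j1" using j1_ge2 j1k unfolding j0_def by auto
      have nPj0: "\<not> P j0" unfolding j0_def j1_def by (rule not_less_Least) (use j1_ge2 j1_def in auto)
      have nilj: "N ^\<^sub>m Suc j0 = 0\<^sub>m k k" using Pj1 j0 unfolding P_def by simp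
      have form: "(U - 1\<^sub>m k) ^\<^sub>m j0 = (of_nat r ^ j0) \<cdot>\<^sub>m N ^\<^sub>m j0"
        using unipotent_pow_formula[OF N nilj, of r] Ur by simp
      obtain a b where ab: "a < k" "b < k" and nz: "(N ^\<^sub>m j0) $$ (a,b) \<noteq> 0"
      proof -
        have "\<exists>a b. a < k \<and> b < k \<and> (N ^\<^sub>m j0) $$ (a,b) \<noteq> 0"
        proof (rule ccontr)
          assume "\<not> ?thesis"
          then have "N ^\<^sub>m j0 = 0\<^sub>m k k" using N by (intro eq_matI) auto
          then show False using nPj0 unfolding P_def by simp
        qed
        then show ?thesis using that by blast
      qed
      have "isint ((of_nat D \<cdot>\<^sub>m N) ^\<^sub>m j0)" by (rule isint_pow[OF smult_carrier_mat[OF N] int])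
      then have "isint ((of_nat D ^ j0) \<cdot>\<^sub>m (N ^\<^sub>m j0))" using smult_pow_mat[OF N] by simp
      then have "(of_nat D ^ j0) * (N ^\<^sub>m j0) $$ (a,b) \<in> \<int>" using ab N unfolding isint_def by auto
      moreover have "(of_nat D ^ j0) * (N ^\<^sub>m j0) $$ (a,b) \<noteq> 0" using nz D by simp
      ultimately have ge1: "norm ((of_nat D ^ j0) * (N ^\<^sub>m j0) $$ (a,b)) \<ge> 1" by (rule Ints_nonzero_norm_ge1)
      have Dpos: "real D > 0" using D by simp
      have normX: "norm ((N ^\<^sub>m j0) $$ (a,b)) \<ge> 1 / real D ^ j0"
        using ge1 Dpos by (simp add: norm_mult norm_power field_simps)
      have rD: "real r / real D > Cst + 1"
      proof -
        have "real B \<ge> real D * (Cst + 1)" unfolding B_def by linarith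
        then have "real r > real D * (Cst + 1)" using rB by linarith
        then show ?thesis using Dpos by (simp add: field_simps)
      qed
      have "norm (((U - 1\<^sub>m k) ^\<^sub>m j0) $$ (a,b)) = real r ^ j0 * norm ((N ^\<^sub>m j0) $$ (a,b))"
        unfolding form using ab N by (simp add: norm_mult norm_power)
      also have "\<dots> \<ge> real r ^ j0 * (1 / real D ^ j0)"
        by (rule mult_left_mono[OF normX]) simp
      finally have "norm (((U - 1\<^sub>m k) ^\<^sub>m j0) $$ (a,b)) \<ge> (real r / real D) ^ j0"
        by (simp add: power_divide)
      moreover have "(real r / real D) ^ j0 \<ge> real r / real D"
      proof -
        have "1 \<le> real r / real D" using rD Cst0 by linarith
        then show ?thesis using j0(1) by (metis One_nat_def power_increasing power_one_right)
      qed
      moreover have "norm (((U - 1\<^sub>m k) ^\<^sub>m j0) $$ (a,b)) \<le> Cst" using Cst_ge[OF j0(2) ab] .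
      ultimately show False using rD by linarith
    qed
  qed
qed


lemma eigenvalue_set_es:
  fixes A :: "complex mat"
  assumes A: "A \<in> carrier_mat n n" and cp: "char_poly A = (\<Prod>e\<leftarrow>es. [:- f e, 1:])"
  shows "eigenvalue A x \<longleftrightarrow> x \<in> f ` set es"
  using eigenvalue_root_char_poly[OF A] cp poly_prod_lin_zero[of f es x] by simp

lemma matrix_main:
  fixes S :: "complex mat set" and Z Zi :: "complex mat" and W :: "nat \<Rightarrow> complex mat" and r :: "nat \<Rightarrow> nat"
  assumes D: "D > 0"
    and SI: "\<And>A. A \<in> S \<Longrightarrow> intmat k D A"
    and Smult: "\<And>A B. A \<in> S \<Longrightarrow> B \<in> S \<Longrightarrow> A * B \<in> S"
    and S1: "1\<^sub>m k \<in> S"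
    and Z: "Z \<in> S" and Zi: "Zi \<in> carrier_mat k k" and ZiZ: "Zi * Z = 1\<^sub>m k"
    and W: "\<And>i. W i \<in> S" and WZ: "\<And>i. W i ^\<^sub>m r i = Z"
    and lim: "filterlim r at_top sequentially"
  shows "\<exists>m>0. Z ^\<^sub>m m = 1\<^sub>m k"
proof -
  have car: "A \<in> carrier_mat k k" if "A \<in> S" for A using SI[OF that] unfolding intmat_def by auto
  have Spow: "A ^\<^sub>m m \<in> S" if A: "A \<in> S" for A m
  proof (induct m)
    case 0 then show ?case using car[OF A] S1 by simp
  next
    case (Suc m) then show ?case using Smult[OF _ A] by simp
  qed
  have Zc: "Z \<in> carrier_mat k k" using car[OF Z] .
  define R0 where "R0 = Max (insert 1 (norm ` (Collect (eigenvalue Z) \<union> Collect (eigenvalue Zi))))"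
  have finSp: "finite (Collect (eigenvalue Z) \<union> Collect (eigenvalue Zi))"
    using card_finite_spectrum(1)[OF Zc] card_finite_spectrum(1)[OF Zi] unfolding spectrum_def by auto
  have R0_1: "R0 \<ge> 1" unfolding R0_def using finSp by (intro Max_ge) auto
  have R0Z: "norm x \<le> R0" if "eigenvalue Z x" for x
    unfolding R0_def using finSp that by (intro Max_ge) auto
  have R0Zi: "norm x \<le> R0" if "eigenvalue Zi x" for x
    unfolding R0_def using finSp that by (intro Max_ge) auto
  have S3: "norm mu ^ r i \<le> R0 \<and> 1 \<le> R0 * norm mu ^ r i" if ev: "eigenvalue (W i) mu" for i mu
  proof -
    have Wc: "W i \<in> carrier_mat k k" using car[OF W] .
    obtain v where v: "eigenvector (W i) v mu" using ev unfolding eigenvalue_def by blast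
    have vc: "v \<in> carrier_vec k" and v0: "v \<noteq> 0\<^sub>v k" using v Wc unfolding eigenvector_def by auto
    have Zv: "Z *\<^sub>v v = mu ^ r i \<cdot>\<^sub>v v" using eigenvector_pow[OF Wc v, of "r i"] WZ by simp
    then have evz: "eigenvalue Z (mu ^ r i)" using vc v0 Zc unfolding eigenvalue_def eigenvector_def by auto
    have b1: "norm mu ^ r i \<le> R0" using R0Z[OF evz] by (simp add: norm_power)
    have "v = Zi *\<^sub>v (Z *\<^sub>v v)" using ZiZ Zi Zc vc by (simp add: assoc_mult_mat_vec[symmetric])
    also have "\<dots> = mu ^ r i \<cdot>\<^sub>v (Zi *\<^sub>v v)" unfolding Zv by (rule mult_mat_vec[OF Zi vc])
    finally have vv: "v = mu ^ r i \<cdot>\<^sub>v (Zi *\<^sub>v v)" .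
    have nz: "mu ^ r i \<noteq> 0"
    proof
      assume h: "mu ^ r i = 0"
      have v': "v = 0 \<cdot>\<^sub>v (Zi *\<^sub>v v)" using vv h by simp
      have "v = 0\<^sub>v k"
      proof (rule eq_vecI)
        fix ia assume ia: "ia < dim_vec (0\<^sub>v k :: complex vec)"
        show "v $ ia = 0\<^sub>v k $ ia" by (subst v') (use ia Zi in auto)
      qed (use vc in auto)
      then show False using v0 by simp
    qed
    have "Zi *\<^sub>v v = (1 / mu ^ r i) \<cdot>\<^sub>v v"
    proof -
      have "(1 / mu ^ r i) \<cdot>\<^sub>v v = (1 / mu ^ r i) \<cdot>\<^sub>v (mu ^ r i \<cdot>\<^sub>v (Zi *\<^sub>v v))" using vv by simp
      also have "\<dots> = Zi *\<^sub>v v"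
      proof -
        have c1: "1 / mu ^ r i * mu ^ r i = 1" using nz by (rule divide_self_if[THEN subst, OF refl, simplified] | simp)
        show ?thesis unfolding smult_smult_assoc c1 by (rule one_smult_vec)
      qed
      finally show ?thesis by simp
    qed
    then have "eigenvalue Zi (1 / mu ^ r i)" using vc v0 Zi unfolding eigenvalue_def eigenvector_def by auto
    then have "norm (1 / mu ^ r i) \<le> R0" by (rule R0Zi)
    then have h1: "1 / norm mu ^ r i \<le> R0" by (simp add: norm_divide norm_power)
    have pos: "norm mu ^ r i > 0" using nz by (simp add: norm_power[symmetric])
    have "1 \<le> R0 * norm mu ^ r i" using h1 pos by (simp add: divide_le_eq mult.commute)
    with b1 show ?thesis by simp
  qed
  obtain N0 where N0: "R0 < 2 ^ N0" using real_arch_pow[of 2 R0] by auto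
  have ev_r: "eventually (\<lambda>i. n \<le> r i) sequentially" for n using lim unfolding filterlim_at_top by auto
  define F where "F = {mu. \<exists>A. A \<in> S \<and> intmat k D A \<and> eigenvalue A mu \<and> (\<forall>nu. eigenvalue A nu \<longrightarrow> norm nu \<le> 2)}"
  have finF: "finite F" unfolding F_def by (rule finite_ev_bounded[OF D])
  have evG: "eventually (\<lambda>i. norm mu = 1 \<or> R0 < norm mu ^ r i \<or> R0 * norm mu ^ r i < 1) sequentially" for mu
  proof (cases "norm mu > 1")
    case True
    obtain n where n: "R0 < norm mu ^ n" using real_arch_pow[OF True] by auto
    show ?thesis using ev_r[of n]
    proof (rule eventually_mono)
      fix i assume "n \<le> r i"
      then have "norm mu ^ n \<le> norm mu ^ r i" using True by (intro power_increasing) auto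
      then show "norm mu = 1 \<or> R0 < norm mu ^ r i \<or> R0 * norm mu ^ r i < 1" using n by auto
    qed
  next
    case False
    show ?thesis
    proof (cases "norm mu = 1")
      case True then show ?thesis by simp
    next
      case False2: False
      with False have lt: "norm mu < 1" by auto
      obtain n where n: "norm mu ^ n < 1 / R0" using real_arch_pow_inv[OF _ lt, of "1/R0"] R0_1 by auto
      show ?thesis using ev_r[of n]
      proof (rule eventually_mono)
        fix i assume "n \<le> r i"
        then have "norm mu ^ r i \<le> norm mu ^ n" using lt by (intro power_decreasing) auto
        then have "norm mu ^ r i < 1 / R0" using n by linarith
        then have "R0 * norm mu ^ r i < 1" using R0_1 by (simp add: field_simps)
        then show "norm mu = 1 \<or> R0 < norm mu ^ r i \<or> R0 * norm mu ^ r i < 1" by auto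
      qed
    qed
  qed
  define good where "good i \<longleftrightarrow> N0 \<le> r i \<and> (\<forall>mu\<in>F. norm mu = 1 \<or> R0 < norm mu ^ r i \<or> R0 * norm mu ^ r i < 1)" for i
  have evF: "eventually (\<lambda>i. \<forall>mu\<in>F. norm mu = 1 \<or> R0 < norm mu ^ r i \<or> R0 * norm mu ^ r i < 1) sequentially"
    by (rule eventually_ball_finite[OF finF]) (use evG in blast)
  have ev_good: "eventually good sequentially"
    unfolding good_def using eventually_conj[OF ev_r[of N0] evF] by simp
  have good_norm: "norm mu = 1" if g: "good i" and ev: "eigenvalue (W i) mu" for i mu
  proof -
    have le2: "norm nu \<le> 2" if "eigenvalue (W i) nu" for nu
    proof (rule ccontr)
      assume "\<not> norm nu \<le> 2"
      then have gt: "norm nu > 2" by simp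
      have "(2::real) ^ N0 \<le> 2 ^ r i" using g unfolding good_def by (intro power_increasing) auto
      also have "\<dots> \<le> norm nu ^ r i" using gt by (intro power_mono) auto
      finally show False using S3[OF that] N0 by linarith
    qed
    have "mu \<in> F" unfolding F_def using W SI le2 ev by blast
    then have "norm mu = 1 \<or> R0 < norm mu ^ r i \<or> R0 * norm mu ^ r i < 1" using g unfolding good_def by auto
    then show ?thesis using S3[OF ev] by auto
  qed
  define F1 where "F1 = {mu. \<exists>A. A \<in> S \<and> intmat k D A \<and> eigenvalue A mu \<and> (\<forall>nu. eigenvalue A nu \<longrightarrow> norm nu = 1)}"
  have "F1 \<subseteq> F" unfolding F1_def F_def by force
  then have finF1: "finite F1" using finF by (rule finite_subset)
  have kron: "\<exists>t>0. mu ^ t = 1" if mu: "mu \<in> F1" for mu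
  proof -
    obtain A where A: "A \<in> S" and evA: "eigenvalue A mu" and allA: "\<And>nu. eigenvalue A nu \<Longrightarrow> norm nu = 1"
      using mu unfolding F1_def by blast
    have Ac: "A \<in> carrier_mat k k" using car[OF A] .
    obtain es where cp: "char_poly A = (\<Prod>e\<leftarrow>es. [:- e, 1:])"
      and cpm: "\<And>m. char_poly (A ^\<^sub>m m) = (\<Prod>e\<leftarrow>es. [:- (e ^ m), 1:])"
      using schur_pow[OF Ac] by metis
    have "mu ^ m \<in> F1" for m
    proof -
      have "eigenvalue (A ^\<^sub>m m) (mu ^ m)"
      proof -
        obtain v where v: "eigenvector A v mu" using evA unfolding eigenvalue_def by blast
        then show ?thesis using eigenvector_pow[OF Ac v, of m] Ac
          unfolding eigenvalue_def eigenvector_def by auto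
      qed
      moreover have "norm nu = 1" if "eigenvalue (A ^\<^sub>m m) nu" for nu
      proof -
        have "nu \<in> (\<lambda>e. e ^ m) ` set es" using eigenvalue_set_es[OF pow_carrier_mat[OF Ac] cpm[of m]] that by simp
        then obtain e where e: "e \<in> set es" and nu: "nu = e ^ m" by auto
        have "eigenvalue A e" using eigenvalue_set_es[OF Ac, of "\<lambda>x. x" es] cp e by simp
        then show ?thesis using allA nu by (simp add: norm_power)
      qed
      ultimately show ?thesis unfolding F1_def using Spow[OF A] SI by blast
    qed
    then have "range (\<lambda>m. mu ^ m) \<subseteq> F1" by auto
    then have "finite (range (\<lambda>m. mu ^ m))" using finF1 by (rule finite_subset)
    then have "\<not> inj (\<lambda>m::nat. mu ^ m)" using finite_imageD infinite_UNIV_nat by blast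
    then obtain a b :: nat where ab: "a \<noteq> b" "mu ^ a = mu ^ b" unfolding inj_def by blast
    have mu0: "mu \<noteq> 0" using allA[OF evA] by auto
    have "\<exists>a b. a < b \<and> mu ^ a = mu ^ b"
    proof (cases "a < b")
      case True then show ?thesis using ab by blast
    next
      case False then have "b < a" using ab by auto
      then show ?thesis using ab by metis
    qed
    then obtain a b where ab: "a < b" "mu ^ a = mu ^ b" by blast
    have "mu ^ a * mu ^ (b - a) = mu ^ b" using ab(1) by (simp add: power_add[symmetric])
    then have "mu ^ a * mu ^ (b - a) = mu ^ a * 1" using ab(2) by simp
    then have "mu ^ (b - a) = 1" using mu0 by simp
    then show ?thesis using ab by (intro exI[of _ "b - a"]) auto
  qed
  define ordf where "ordf mu = (SOME t. t > 0 \<and> mu ^ t = (1::complex))" for mu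
  have ordf: "ordf mu > 0 \<and> mu ^ ordf mu = 1" if "mu \<in> F1" for mu
    unfolding ordf_def using someI_ex[OF kron[OF that]] .
  define N1 where "N1 = (\<Prod>mu\<in>F1. ordf mu)"
  have N1pos: "N1 > 0" unfolding N1_def using ordf by (intro prod_pos) auto
  have N1pow: "mu ^ N1 = 1" if mu: "mu \<in> F1" for mu
  proof -
    have "ordf mu dvd N1" unfolding N1_def using finF1 mu by (rule dvd_prodI)
    then obtain q where "N1 = ordf mu * q" by (auto elim: dvdE)
    then show ?thesis using ordf[OF mu] by (simp add: power_mult)
  qed
  define U where "U = Z ^\<^sub>m N1"
  have Uc: "U \<in> carrier_mat k k" using Zc by (simp add: U_def)
  obtain B where B: "\<And>N r. N \<in> carrier_mat k k \<Longrightarrow> N ^\<^sub>m k = 0\<^sub>m k k \<Longrightarrow> isint (of_nat D \<cdot>\<^sub>m N) \<Longrightarrow>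
            (1\<^sub>m k + N) ^\<^sub>m r = U \<Longrightarrow> r > B \<Longrightarrow> N = 0\<^sub>m k k"
    using unipotent_root_trivial[OF D Uc] by blast
  have "eventually (\<lambda>i. good i \<and> Suc B \<le> r i) sequentially"
    using ev_good ev_r[of "Suc B"] by (simp add: eventually_conj_iff)
  then obtain i where gi: "good i" and rB: "r i > B" unfolding eventually_sequentially by auto
  have Wc: "W i \<in> carrier_mat k k" using car[OF W] .
  obtain es where cp: "char_poly (W i) = (\<Prod>e\<leftarrow>es. [:- e, 1:])"
    and uni: "\<And>m. (\<forall>e\<in>set es. e ^ m = 1) \<Longrightarrow> (W i ^\<^sub>m m - 1\<^sub>m k) ^\<^sub>m k = 0\<^sub>m k k"
    using schur_pow[OF Wc] by metis
  have "\<forall>e\<in>set es. e ^ N1 = 1"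
  proof
    fix e assume e: "e \<in> set es"
    have "eigenvalue (W i) e" using eigenvalue_set_es[OF Wc, of "\<lambda>x. x" es] cp e by simp
    then have "e \<in> F1" unfolding F1_def using W SI good_norm[OF gi] by blast
    then show "e ^ N1 = 1" by (rule N1pow)
  qed
  then have nilV: "(W i ^\<^sub>m N1 - 1\<^sub>m k) ^\<^sub>m k = 0\<^sub>m k k" by (rule uni)
  define V where "V = W i ^\<^sub>m N1"
  define Nm where "Nm = V - 1\<^sub>m k"
  have Vc: "V \<in> carrier_mat k k" using Wc by (simp add: V_def)
  have Nmc: "Nm \<in> carrier_mat k k" unfolding Nm_def by (rule minus_carrier_mat[OF one_carrier_mat])
  have VN: "1\<^sub>m k + Nm = V" unfolding Nm_def by (rule eq_matI) (use Vc in auto)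
  have intV: "intmat k D V" unfolding V_def by (rule SI[OF Spow[OF W]])
  have intN: "isint (of_nat D \<cdot>\<^sub>m Nm)"
    unfolding isint_def
  proof (intro allI impI)
    fix a b assume a: "a < dim_row (of_nat D \<cdot>\<^sub>m Nm)" and b: "b < dim_col (of_nat D \<cdot>\<^sub>m Nm)"
    then have ab: "a < k" "b < k" using Nmc by auto
    have "(of_nat D \<cdot>\<^sub>m Nm) $$ (a,b) = of_nat D * V $$ (a,b) - of_nat D * (if a = b then 1 else 0)"
      using ab Vc by (simp add: Nm_def algebra_simps)
    also have "\<dots> \<in> \<int>" using intV ab unfolding intmat_def by (intro Ints_diff) auto
    finally show "(of_nat D \<cdot>\<^sub>m Nm) $$ (a,b) \<in> \<int>" .
  qed
  have "(1\<^sub>m k + Nm) ^\<^sub>m r i = U"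
  proof -
    have "(1\<^sub>m k + Nm) ^\<^sub>m r i = W i ^\<^sub>m (N1 * r i)" unfolding VN V_def by (rule pow_mat_mult[OF Wc, symmetric])
    also have "\<dots> = W i ^\<^sub>m (r i * N1)" by (simp add: mult.commute)
    also have "\<dots> = U" unfolding U_def pow_mat_mult[OF Wc] WZ ..
    finally show ?thesis .
  qed
  then have "Nm = 0\<^sub>m k k" using B[OF Nmc _ intN _ rB] nilV unfolding Nm_def V_def by simp
  then have "V = 1\<^sub>m k" using VN Vc by simp
  then have "U = 1\<^sub>m k"
    using \<open>(1\<^sub>m k + Nm) ^\<^sub>m r i = U\<close> VN by (simp add: pow_one_mat)
  then show ?thesis using N1pos unfolding U_def by blast
qed


lemma (in comm_group) finprod_int_pow:
  assumes f: "f \<in> A \<rightarrow> carrier G"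
  shows "(finprod G f A) [^] (m::int) = finprod G (\<lambda>a. f a [^] m) A"
  using f
proof (induct A rule: infinite_finite_induct)
  case (infinite A) then show ?case by simp
next
  case empty then show ?case by simp
next
  case (insert a A)
  then have fa: "f a \<in> carrier G" and fA: "f \<in> A \<rightarrow> carrier G" by auto
  have "finprod G f (insert a A) [^] m = (f a \<otimes> finprod G f A) [^] m"
    using insert fa fA by simp
  also have "\<dots> = f a [^] m \<otimes> finprod G f A [^] m" using fa fA by (simp add: int_pow_distrib)
  also have "\<dots> = f a [^] m \<otimes> finprod G (\<lambda>a. f a [^] m) A" using insert fA by simp
  also have "\<dots> = finprod G (\<lambda>a. f a [^] m) (insert a A)" using insert fa fA by (simp add: Pi_def)
  finally show ?case .
qed

lemma (in comm_group) hom_finprod: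
  assumes h: "h \<in> hom G G" and f: "f \<in> A \<rightarrow> carrier G"
  shows "h (finprod G f A) = finprod G (\<lambda>a. h (f a)) A"
  using f
proof (induct A rule: infinite_finite_induct)
  case (infinite A) then show ?case using h by (simp add: hom_one[OF _ is_group is_group])
next
  case empty then show ?case using h by (simp add: hom_one[OF _ is_group is_group])
next
  case (insert a A)
  then have fa: "f a \<in> carrier G" and fA: "f \<in> A \<rightarrow> carrier G" by auto
  have hc: "\<And>x. x \<in> carrier G \<Longrightarrow> h x \<in> carrier G" using h by (auto simp: hom_def)
  have "h (finprod G f (insert a A)) = h (f a \<otimes> finprod G f A)" using insert fa fA by simp
  also have "\<dots> = h (f a) \<otimes> h (finprod G f A)" using h fa fA by (simp add: hom_mult)
  also have "\<dots> = h (f a) \<otimes> finprod G (\<lambda>a. h (f a)) A" using insert fA by simp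
  also have "\<dots> = finprod G (\<lambda>a. h (f a)) (insert a A)" using insert fa fA hc by (simp add: Pi_def)
  finally show ?case .
qed

locale lin_base = comm_group M for M :: "('a, 'b) monoid_scheme" (structure) +
  fixes bs :: "'a list"
  assumes bs_car: "set bs \<subseteq> carrier M"
begin

abbreviation "kk \<equiv> length bs"

definition lin :: "(nat \<Rightarrow> int) \<Rightarrow> 'a" where
  "lin c = finprod M (\<lambda>j. bs ! j [^] c j) {..<kk}"

lemma bs_in: "j < kk \<Longrightarrow> bs ! j \<in> carrier M"
  using bs_car by auto

lemma lin_Pi: "(\<lambda>j. bs ! j [^] (c j :: int)) \<in> {..<kk} \<rightarrow> carrier M"
  using bs_in by auto

lemma lin_closed[simp]: "lin c \<in> carrier M"
  unfolding lin_def using lin_Pi by simp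

lemma lin_cong: "(\<And>j. j < kk \<Longrightarrow> c j = d j) \<Longrightarrow> lin c = lin d"
  unfolding lin_def by (intro finprod_cong') (use lin_Pi in auto)

lemma lin_zero: "lin (\<lambda>_. 0) = \<one>"
  unfolding lin_def by simp

lemma lin_add: "lin (\<lambda>j. c j + d j) = lin c \<otimes> lin d"
proof -
  have "lin (\<lambda>j. c j + d j) = finprod M (\<lambda>j. bs ! j [^] c j \<otimes> bs ! j [^] d j) {..<kk}"
    unfolding lin_def by (intro finprod_cong') (use bs_in in \<open>auto simp: int_pow_mult\<close>)
  also have "\<dots> = lin c \<otimes> lin d" unfolding lin_def using lin_Pi by (intro finprod_multf) auto
  finally show ?thesis .
qed

lemma lin_smul: "lin c [^] (m::int) = lin (\<lambda>j. m * c j)"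
proof -
  have "lin c [^] m = finprod M (\<lambda>j. (bs ! j [^] c j) [^] m) {..<kk}"
    unfolding lin_def by (rule finprod_int_pow[OF lin_Pi])
  also have "\<dots> = lin (\<lambda>j. m * c j)"
    unfolding lin_def by (intro finprod_cong') (use bs_in in \<open>auto simp: int_pow_pow mult.commute\<close>)
  finally show ?thesis .
qed

end

locale fgsetup = lin_base M bs for M :: "('a, 'b) monoid_scheme" (structure) and bs +
  fixes D :: nat
  assumes indep: "\<And>c. finprod M (\<lambda>j. bs ! j [^] (c j :: int)) {..<length bs} = \<one> \<Longrightarrow> \<forall>j<length bs. c j = 0"
    and Dpos: "D > 0"
    and Dspan: "\<And>x. x \<in> carrier M \<Longrightarrow> \<exists>c. x [^] (int D) = finprod M (\<lambda>j. bs ! j [^] (c j :: int)) {..<length bs}"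
begin

lemma lin_inj: assumes "lin c = lin d" shows "\<And>j. j < kk \<Longrightarrow> c j = d j"
proof -
  have "lin (\<lambda>j. c j + (- 1) * d j) = lin c \<otimes> lin (\<lambda>j. (- 1) * d j)" by (rule lin_add)
  also have "lin (\<lambda>j. (- 1) * d j) = lin d [^] (- 1 :: int)" by (rule lin_smul[symmetric])
  also have "lin c \<otimes> lin d [^] (- 1 :: int) = \<one>" using assms by (simp add: int_pow_neg)
  finally have h: "lin (\<lambda>j. c j + (- 1) * d j) = \<one>" .
  then have "finprod M (\<lambda>j. bs ! j [^] (c j + (- 1) * d j)) {..<kk} = \<one>" by (simp only: lin_def)
  then have "\<forall>j<kk. c j + (- 1) * d j = 0" by (rule indep)
  then show "\<And>j. j < kk \<Longrightarrow> c j = d j" by auto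
qed

lemma lin_sum:
  assumes L: "finite L"
  shows "finprod M (\<lambda>l. lin (phi l) [^] (gam l :: int)) L = lin (\<lambda>a. \<Sum>l\<in>L. gam l * phi l a)"
  using L
proof (induct L rule: finite_induct)
  case empty then show ?case by (simp add: lin_zero)
next
  case (insert l L)
  have "finprod M (\<lambda>l. lin (phi l) [^] gam l) (insert l L) =
        lin (phi l) [^] gam l \<otimes> finprod M (\<lambda>l. lin (phi l) [^] gam l) L"
    using insert by (intro finprod_insert) auto
  also have "\<dots> = lin (\<lambda>a. gam l * phi l a) \<otimes> lin (\<lambda>a. \<Sum>l\<in>L. gam l * phi l a)"
    using insert by (simp add: lin_smul)
  also have "\<dots> = lin (\<lambda>a. \<Sum>l\<in>insert l L. gam l * phi l a)"
    using insert by (simp add: lin_add[symmetric])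
  finally show ?case .
qed

lemma hom_lin: assumes h: "h \<in> hom M M"
  shows "h (lin c) = finprod M (\<lambda>j. h (bs ! j) [^] c j) {..<kk}"
proof -
  have "h (lin c) = finprod M (\<lambda>j. h (bs ! j [^] c j)) {..<kk}"
    unfolding lin_def by (rule hom_finprod[OF h lin_Pi])
  also have "\<dots> = finprod M (\<lambda>j. h (bs ! j) [^] c j) {..<kk}"
    by (intro finprod_cong') (use h bs_in in \<open>auto simp: hom_int_pow[OF h _ is_group is_group] hom_def\<close>)
  finally show ?thesis .
qed

definition coordD :: "'a \<Rightarrow> nat \<Rightarrow> int" where
  "coordD x = (SOME c. x [^] (int D) = lin c)"

lemma coordD: "x \<in> carrier M \<Longrightarrow> x [^] (int D) = lin (coordD x)"
  unfolding coordD_def using Dspan[of x] someI_ex[of "\<lambda>c. x [^] (int D) = lin c"]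
  by (auto simp: lin_def)

lemma hom_closed: "h \<in> hom M M \<Longrightarrow> x \<in> carrier M \<Longrightarrow> h x \<in> carrier M"
  by (auto simp: hom_def)

lemma coord_comp:
  assumes f: "f \<in> hom M M" and y: "y \<in> carrier M" and a: "a < kk"
  shows "int D * coordD (f y) a = (\<Sum>l<kk. coordD y l * coordD (f (bs ! l)) a)"
proof -
  have fy: "f y \<in> carrier M" using hom_closed[OF f y] .
  have fb: "\<And>l. l < kk \<Longrightarrow> f (bs ! l) \<in> carrier M" using hom_closed[OF f bs_in] .
  have "(f y [^] (int D)) [^] (int D) = f (y [^] (int D)) [^] (int D)"
    using hom_int_pow[OF f y is_group is_group] by simp
  also have "\<dots> = f (lin (coordD y)) [^] (int D)" using coordD[OF y] by simp
  also have "\<dots> = (finprod M (\<lambda>l. f (bs ! l) [^] coordD y l) {..<kk}) [^] (int D)"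
    using hom_lin[OF f] by simp
  also have "\<dots> = finprod M (\<lambda>l. (f (bs ! l) [^] coordD y l) [^] (int D)) {..<kk}"
    by (rule finprod_int_pow) (use fb in auto)
  also have "\<dots> = finprod M (\<lambda>l. lin (coordD (f (bs ! l))) [^] coordD y l) {..<kk}"
  proof (intro finprod_cong')
    fix l assume l: "l \<in> {..<kk}"
    have "(f (bs ! l) [^] coordD y l) [^] (int D) = (f (bs ! l) [^] (int D)) [^] coordD y l"
      using fb l by (simp add: int_pow_pow mult.commute)
    also have "\<dots> = lin (coordD (f (bs ! l))) [^] coordD y l" using coordD[OF fb] l by simp
    finally show "(f (bs ! l) [^] coordD y l) [^] (int D) = lin (coordD (f (bs ! l))) [^] coordD y l" .
  qed auto
  also have "\<dots> = lin (\<lambda>a. \<Sum>l<kk. coordD y l * coordD (f (bs ! l)) a)" by (rule lin_sum) simp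
  finally have e1: "(f y [^] (int D)) [^] (int D) = lin (\<lambda>a. \<Sum>l<kk. coordD y l * coordD (f (bs ! l)) a)" .
  have "(f y [^] (int D)) [^] (int D) = lin (coordD (f y)) [^] (int D)"
    using coordD[OF fy] by (rule arg_cong)
  also have "\<dots> = lin (\<lambda>a. int D * coordD (f y) a)" by (rule lin_smul)
  finally have e2: "(f y [^] (int D)) [^] (int D) = lin (\<lambda>a. int D * coordD (f y) a)" .
  have "lin (\<lambda>a. int D * coordD (f y) a) = lin (\<lambda>a. \<Sum>l<kk. coordD y l * coordD (f (bs ! l)) a)"
    using trans[OF e2[symmetric] e1] .
  from lin_inj[OF this a] show ?thesis .
qed

lemma coord_id:
  assumes b: "b < kk" and a: "a < kk"
  shows "coordD (bs ! b) a = (if a = b then int D else 0)"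
proof -
  have "lin (\<lambda>j. if j = b then int D else 0) = finprod M (\<lambda>j. if j = b then bs ! j [^] (int D) else \<one>) {..<kk}"
    unfolding lin_def by (intro finprod_cong') (use bs_in in \<open>auto simp: Pi_def\<close>)
  also have "\<dots> = bs ! b [^] (int D)"
    by (rule finprod_singleton_swap) (use b bs_in in auto)
  also have "\<dots> = lin (coordD (bs ! b))" using coordD[OF bs_in[OF b]] .
  finally have "lin (\<lambda>j. if j = b then int D else 0) = lin (coordD (bs ! b))" .
  from lin_inj[OF this a] show ?thesis by simp
qed

lemma fix_DD:
  assumes f: "f \<in> hom M M" and fb: "\<And>b a. b < kk \<Longrightarrow> a < kk \<Longrightarrow> coordD (f (bs ! b)) a = (if a = b then int D else 0)"
    and x: "x \<in> carrier M"
  shows "f x [^] (int D * int D) = x [^] (int D * int D)"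
proof -
  have fbD: "f (bs ! l) [^] (int D) = bs ! l [^] (int D)" if l: "l < kk" for l
  proof -
    have "f (bs ! l) [^] (int D) = lin (coordD (f (bs ! l)))" using coordD[OF hom_closed[OF f bs_in[OF l]]] .
    also have "\<dots> = lin (coordD (bs ! l))" using fb[OF l] coord_id[OF l] by (intro lin_cong) auto
    also have "\<dots> = bs ! l [^] (int D)" using coordD[OF bs_in[OF l]] by simp
    finally show ?thesis .
  qed
  have fx: "f x \<in> carrier M" using hom_closed[OF f x] .
  have "f x [^] (int D * int D) = (f (x [^] (int D))) [^] (int D)"
    using hom_int_pow[OF f x is_group is_group] fx by (simp add: int_pow_pow)
  also have "\<dots> = (f (lin (coordD x))) [^] (int D)" using coordD[OF x] by simp
  also have "\<dots> = finprod M (\<lambda>l. (f (bs ! l) [^] coordD x l) [^] (int D)) {..<kk}"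
    unfolding hom_lin[OF f] by (rule finprod_int_pow) (use hom_closed[OF f bs_in] in auto)
  also have "\<dots> = finprod M (\<lambda>l. (bs ! l [^] coordD x l) [^] (int D)) {..<kk}"
  proof (intro finprod_cong')
    fix l assume l: "l \<in> {..<kk}"
    have "(f (bs ! l) [^] coordD x l) [^] (int D) = (f (bs ! l) [^] (int D)) [^] coordD x l"
      using hom_closed[OF f bs_in] l by (simp add: int_pow_pow mult.commute)
    also have "\<dots> = (bs ! l [^] (int D)) [^] coordD x l" using fbD l by simp
    also have "\<dots> = (bs ! l [^] coordD x l) [^] (int D)"
      using bs_in l by (simp add: int_pow_pow mult.commute)
    finally show "(f (bs ! l) [^] coordD x l) [^] (int D) = (bs ! l [^] coordD x l) [^] (int D)" .
  qed (use bs_in in auto)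
  also have "\<dots> = (lin (coordD x)) [^] (int D)"
    unfolding lin_def by (rule finprod_int_pow[symmetric]) (use bs_in in auto)
  also have "\<dots> = x [^] (int D * int D)" using coordD[OF x] int_pow_pow[OF x, of "int D" "int D"] by simp
  finally show ?thesis .
qed

end

lemma (in comm_group) glin_add:
  assumes "Sg \<subseteq> carrier G"
  shows "finprod G (\<lambda>s. s [^] (n s + n' s :: int)) Sg = finprod G (\<lambda>s. s [^] n s) Sg \<otimes> finprod G (\<lambda>s. s [^] n' s) Sg"
proof -
  have "finprod G (\<lambda>s. s [^] (n s + n' s :: int)) Sg = finprod G (\<lambda>s. s [^] n s \<otimes> s [^] n' s) Sg"
    by (intro finprod_cong') (use assms in \<open>auto simp: int_pow_mult\<close>)
  also have "\<dots> = finprod G (\<lambda>s. s [^] n s) Sg \<otimes> finprod G (\<lambda>s. s [^] n' s) Sg"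
    using assms by (intro finprod_multf) auto
  finally show ?thesis .
qed

lemma (in comm_group) glin_single:
  assumes "Sg \<subseteq> carrier G" "finite Sg" "h \<in> Sg"
  shows "finprod G (\<lambda>s. s [^] (if s = h then e else 0 :: int)) Sg = h [^] e"
proof -
  have "finprod G (\<lambda>s. s [^] (if s = h then e else 0 :: int)) Sg = finprod G (\<lambda>s. if s = h then s [^] e else \<one>) Sg"
    by (intro finprod_cong') (use assms in \<open>auto simp: Pi_def\<close>)
  also have "\<dots> = h [^] e" by (rule finprod_singleton_swap) (use assms in auto)
  finally show ?thesis .
qed

lemma (in comm_group) gen_repr:
  assumes Scar: "Sg \<subseteq> carrier G" and Sfin: "finite Sg" and x: "x \<in> generate G Sg"
  shows "\<exists>n. x = finprod G (\<lambda>s. s [^] (n s :: int)) Sg"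
  using x
proof (induct rule: generate.induct)
  case one
  show ?case by (rule exI[of _ "\<lambda>_. 0"]) simp
next
  case (incl h)
  show ?case using glin_single[OF Scar Sfin incl, of 1] incl Scar
    by (intro exI[of _ "\<lambda>s. if s = h then 1 else 0"]) auto
next
  case (inv h)
  show ?case using glin_single[OF Scar Sfin inv, of "-1"] inv Scar
    by (intro exI[of _ "\<lambda>s. if s = h then -1 else 0"]) (auto simp: int_pow_neg)
next
  case (eng h1 h2)
  then obtain n1 n2 where "h1 = finprod G (\<lambda>s. s [^] (n1 s :: int)) Sg" "h2 = finprod G (\<lambda>s. s [^] (n2 s :: int)) Sg" by blast
  then show ?case using glin_add[OF Scar, of n1 n2] by (intro exI[of _ "\<lambda>s. n1 s + n2 s"]) simp
qed

lemma (in comm_group) fg_setup_exists: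
  assumes Sfin: "finite Sg" and Scar: "Sg \<subseteq> carrier G" and gen: "generate G Sg = carrier G"
  shows "\<exists>bs D. fgsetup G bs D"
proof -
  define indepL where "indepL bs \<longleftrightarrow> (\<forall>c. finprod G (\<lambda>j. bs ! j [^] (c j :: int)) {..<length bs} = \<one> \<longrightarrow> (\<forall>j<length bs. c j = 0))" for bs
  define P where "P bs \<longleftrightarrow> set bs \<subseteq> Sg \<and> distinct bs \<and> indepL bs" for bs
  have P0: "P []" unfolding P_def indepL_def by simp
  have Pb: "\<forall>y. P y \<longrightarrow> length y < Suc (card Sg)"
  proof (intro allI impI)
    fix y assume "P y"
    then have d: "distinct y" "set y \<subseteq> Sg" unfolding P_def by auto
    have "length y = card (set y)" using distinct_card[OF d(1)] by simp
    also have "\<dots> \<le> card Sg" using card_mono[OF Sfin d(2)] .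
    finally show "length y < Suc (card Sg)" by simp
  qed
  obtain bs where Pbs: "P bs" and maxbs: "\<And>y. P y \<Longrightarrow> length y \<le> length bs"
    using Lattices_Big.ex_has_greatest_nat[of P "[]" length "Suc (card Sg)", OF P0 Pb] by blast
  have bs_car: "set bs \<subseteq> carrier G" using Pbs Scar unfolding P_def by auto
  interpret L: lin_base G bs by unfold_locales (rule bs_car)
  have indbs: "indepL bs" using Pbs unfolding P_def by auto
  have ext: "\<exists>d>0. \<exists>c. g [^] (int d) = L.lin c" if g: "g \<in> Sg" for g
  proof (cases "g \<in> set bs")
    case True
    then obtain i where i: "i < length bs" "bs ! i = g" by (auto simp: in_set_conv_nth)
    have "L.lin (\<lambda>j. if j = i then 1 else 0) = finprod G (\<lambda>j. if j = i then bs ! j else \<one>) {..<length bs}"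
      unfolding L.lin_def by (intro finprod_cong') (use L.bs_in in \<open>auto simp: Pi_def\<close>)
    also have "\<dots> = g" using finprod_singleton_swap[of i "{..<length bs}" "\<lambda>j. bs ! j"] i L.bs_in by auto
    finally show ?thesis using i Scar g by (intro exI[of _ 1]) auto
  next
    case False
    let ?bs' = "bs @ [g]"
    have "\<not> P ?bs'" using maxbs[of ?bs'] by auto
    moreover have "set ?bs' \<subseteq> Sg" "distinct ?bs'" using Pbs g False unfolding P_def by auto
    ultimately have "\<not> indepL ?bs'" unfolding P_def by auto
    then obtain c where c1: "finprod G (\<lambda>j. ?bs' ! j [^] (c j :: int)) {..<Suc (length bs)} = \<one>"
      and c2: "\<exists>j<Suc (length bs). c j \<noteq> 0" unfolding indepL_def by auto
    have gc: "g \<in> carrier G" using g Scar by auto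
    have "finprod G (\<lambda>j. ?bs' ! j [^] (c j :: int)) {..<Suc (length bs)} =
          ?bs' ! length bs [^] c (length bs) \<otimes> finprod G (\<lambda>j. ?bs' ! j [^] (c j :: int)) {..<length bs}"
      unfolding lessThan_Suc using L.bs_in gc by (intro finprod_insert) (auto simp: Pi_def nth_append)
    also have "finprod G (\<lambda>j. ?bs' ! j [^] (c j :: int)) {..<length bs} = L.lin c"
      unfolding L.lin_def by (intro finprod_cong') (use L.bs_in in \<open>auto simp: nth_append\<close>)
    finally have eq: "g [^] c (length bs) \<otimes> L.lin c = \<one>" using c1 by simp
    have ck: "c (length bs) \<noteq> 0"
    proof
      assume ck0: "c (length bs) = 0"
      then have "L.lin c = \<one>" using eq by simp
      then have "\<forall>j<length bs. c j = 0" using indbs unfolding indepL_def L.lin_def by blast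
      then show False using c2 ck0 by (auto simp: less_Suc_eq)
    qed
    have gck: "g [^] c (length bs) = L.lin (\<lambda>j. (- 1) * c j)"
    proof -
      have "g [^] c (length bs) = inv (L.lin c)" using inv_equality[OF eq L.lin_closed int_pow_closed[OF gc]] by simp
      also have "\<dots> = L.lin c [^] (- 1 :: int)" by (simp add: int_pow_neg)
      also have "\<dots> = L.lin (\<lambda>j. (- 1) * c j)" by (rule L.lin_smul)
      finally show ?thesis .
    qed
    define s where "s = sgn (c (length bs))"
    have e: "int (nat \<bar>c (length bs)\<bar>) = c (length bs) * s" unfolding s_def by (simp add: abs_sgn[symmetric])
    have "g [^] (int (nat \<bar>c (length bs)\<bar>)) = (g [^] c (length bs)) [^] s"
      unfolding e by (rule int_pow_pow[OF gc, symmetric])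
    also have "\<dots> = L.lin (\<lambda>j. s * ((- 1) * c j))" unfolding gck by (rule L.lin_smul)
    finally show ?thesis using ck by (intro exI[of _ "nat \<bar>c (length bs)\<bar>"]) auto
  qed
  obtain dd cc where dd: "\<And>g. g \<in> Sg \<Longrightarrow> dd g > 0 \<and> g [^] (int (dd g)) = L.lin (cc g)"
    using ext by metis
  define D where "D = (\<Prod>g\<in>Sg. dd g)"
  have Dpos: "D > 0" unfolding D_def using dd by (intro prod_pos) auto
  have genD: "\<exists>c. g [^] (int D) = L.lin c" if g: "g \<in> Sg" for g
  proof -
    have "dd g dvd D" unfolding D_def using Sfin g by (rule dvd_prodI)
    then obtain q where q: "D = dd g * q" by (auto elim: dvdE)
    have gc: "g \<in> carrier G" using g Scar by auto
    have "g [^] (int D) = (g [^] (int (dd g))) [^] (int q)" using gc q by (simp add: int_pow_pow)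
    also have "\<dots> = L.lin (\<lambda>j. int q * cc g j)" using dd[OF g] by (simp add: L.lin_smul)
    finally show ?thesis by blast
  qed
  have spanD: "\<exists>c. x [^] (int D) = L.lin c" if x: "x \<in> generate G Sg" for x
    using x
  proof (induct rule: generate.induct)
    case one then show ?case using L.lin_zero by (intro exI[of _ "\<lambda>_. 0"]) simp
  next
    case (incl h) then show ?case by (rule genD)
  next
    case (inv h)
    then obtain c where c: "h [^] (int D) = L.lin c" using genD by blast
    have hc: "h \<in> carrier G" using inv Scar by auto
    have "inv h [^] (int D) = inv (h [^] (int D))" using hc by (rule int_pow_inv)
    also have "\<dots> = L.lin c [^] (- 1 :: int)" using c by (simp add: int_pow_neg)
    also have "\<dots> = L.lin (\<lambda>j. (- 1) * c j)" by (rule L.lin_smul)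
    finally show ?case by blast
  next
    case (eng h1 h2)
    then obtain c1 c2 where c: "h1 [^] (int D) = L.lin c1" "h2 [^] (int D) = L.lin c2" by blast
    have hc: "h1 \<in> carrier G" "h2 \<in> carrier G" using eng gen by auto
    have "(h1 \<otimes> h2) [^] (int D) = h1 [^] (int D) \<otimes> h2 [^] (int D)" using hc by (rule int_pow_distrib)
    also have "\<dots> = L.lin (\<lambda>j. c1 j + c2 j)" using c by (simp add: L.lin_add)
    finally show ?case by blast
  qed
  have "fgsetup G bs D"
  proof (unfold_locales)
    show "\<And>c. finprod G (\<lambda>j. bs ! j [^] (c j :: int)) {..<length bs} = \<one> \<Longrightarrow> \<forall>j<length bs. c j = 0"
      using indbs unfolding indepL_def by blast
    show "D > 0" by (rule Dpos)
    show "\<And>x. x \<in> carrier G \<Longrightarrow> \<exists>c. x [^] (int D) = finprod G (\<lambda>j. bs ! j [^] (c j :: int)) {..<length bs}"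
      using spanD gen unfolding L.lin_def by auto
  qed
  then show ?thesis by blast
qed


lemma perm_pow_id:
  assumes T: "finite T" and inj: "inj_on f T" and im: "f ` T \<subseteq> T"
  shows "\<exists>a>0. \<forall>t\<in>T. (f ^^ a) t = t"
proof -
  have into: "(f ^^ m) ` T \<subseteq> T" for m
    by (induct m) (use im in auto)
  have injm: "inj_on (f ^^ m) T" for m
  proof (induct m)
    case 0 then show ?case by simp
  next
    case (Suc m)
    have "inj_on (f \<circ> f ^^ m) T"
      by (rule comp_inj_on[OF Suc inj_on_subset[OF inj into]])
    then show ?case by (simp only: funpow.simps(2))
  qed
  define phi where "phi m = restrict (f ^^ m) T" for m
  have "range phi \<subseteq> T \<rightarrow>\<^sub>E T" unfolding phi_def using into by (fastforce simp: image_subset_iff)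
  moreover have "finite (T \<rightarrow>\<^sub>E T)" using T by (intro finite_PiE) auto
  ultimately have "finite (range phi)" by (rule finite_subset)
  then have "\<not> inj phi" using finite_imageD infinite_UNIV_nat by blast
  then obtain m1 m2 where mm: "m1 \<noteq> m2" "phi m1 = phi m2" unfolding inj_def by blast
  have "\<exists>m1 m2. m1 < m2 \<and> phi m1 = phi m2"
  proof (cases "m1 < m2")
    case True then show ?thesis using mm by blast
  next
    case False then have "m2 < m1" using mm by auto
    then show ?thesis using mm by metis
  qed
  then obtain m1 m2 where m: "m1 < m2" "phi m1 = phi m2" by blast
  have "\<forall>t\<in>T. (f ^^ (m2 - m1)) t = t"
  proof
    fix t assume t: "t \<in> T"
    have "(f ^^ m1) ((f ^^ (m2 - m1)) t) = (f ^^ m2) t"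
      using m(1) funpow_add[of m1 "m2 - m1" f] by simp
    also have "\<dots> = (f ^^ m1) t" using fun_cong[OF m(2), of t] t unfolding phi_def by simp
    finally show "(f ^^ (m2 - m1)) t = t"
      using injm[of m1] t into[of "m2 - m1"] unfolding inj_on_def by blast
  qed
  then show ?thesis using m(1) by (intro exI[of _ "m2 - m1"]) auto
qed

context fgsetup
begin

lemma tors_DD:
  assumes y: "y \<in> carrier M" and yDD: "y [^] (int D * int D) = \<one>"
  shows "y [^] (int D) = \<one>"
proof -
  have "lin (\<lambda>j. int D * coordD y j) = lin (coordD y) [^] (int D)" by (rule lin_smul[symmetric])
  also have "\<dots> = (y [^] (int D)) [^] (int D)" using coordD[OF y] by simp
  also have "\<dots> = \<one>" using yDD y by (simp add: int_pow_pow)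
  also have "\<dots> = lin (\<lambda>_. 0)" by (simp add: lin_zero)
  finally have e: "lin (\<lambda>j. int D * coordD y j) = lin (\<lambda>_. 0)" .
  have "coordD y j = 0" if "j < kk" for j using lin_inj[OF e that] Dpos by simp
  then have "lin (coordD y) = lin (\<lambda>_. 0)" by (intro lin_cong) auto
  then show ?thesis using coordD[OF y] lin_zero by simp
qed

lemma auto_one: "\<one>\<^bsub>AutoGroup M\<^esub> = (\<lambda>x\<in>carrier M. x)"
  by (simp add: AutoGroup_def BijGroup_def)

lemma auto_carrier: "carrier (AutoGroup M) = auto M"
  by (simp add: AutoGroup_def BijGroup_def)

lemma auto_mult: "f \<in> auto M \<Longrightarrow> g \<in> auto M \<Longrightarrow> f \<otimes>\<^bsub>AutoGroup M\<^esub> g = compose (carrier M) f g"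
  by (simp add: AutoGroup_def BijGroup_def auto_def)

lemma auto_grp: "group (AutoGroup M)"
  by (rule group.AutoGroup[OF is_group])

lemma auto_hom: "f \<in> auto M \<Longrightarrow> f \<in> hom M M"
  by (simp add: auto_def)

lemma auto_pow_apply:
  assumes f: "f \<in> auto M"
  shows "x \<in> carrier M \<Longrightarrow> (f [^]\<^bsub>AutoGroup M\<^esub> (m::nat)) x = (f ^^ m) x"
proof (induct m arbitrary: x)
  case 0 then show ?case by (simp add: auto_one)
next
  case (Suc m)
  have pm: "f [^]\<^bsub>AutoGroup M\<^esub> m \<in> auto M"
    using monoid.nat_pow_closed[OF group.is_monoid[OF auto_grp], of f m] f by (simp add: auto_carrier)
  have fx: "f x \<in> carrier M" using hom_closed[OF auto_hom[OF f] Suc.prems] .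
  have "(f [^]\<^bsub>AutoGroup M\<^esub> Suc m) x = (f [^]\<^bsub>AutoGroup M\<^esub> m \<otimes>\<^bsub>AutoGroup M\<^esub> f) x" by simp
  also have "\<dots> = compose (carrier M) (f [^]\<^bsub>AutoGroup M\<^esub> m) f x" using auto_mult[OF pm f] by simp
  also have "\<dots> = (f [^]\<^bsub>AutoGroup M\<^esub> m) (f x)" using Suc.prems by (simp add: compose_def)
  also have "\<dots> = (f ^^ m) (f x)" using Suc.hyps[OF fx] .
  also have "\<dots> = (f ^^ Suc m) x" unfolding funpow_Suc_right by simp
  finally show ?case .
qed

lemma funpow_hom:
  assumes f: "f \<in> hom M M"
  shows "(f ^^ j) \<in> hom M M"
proof (induct j)
  case 0 then show ?case by (auto simp: hom_def)
next
  case (Suc j)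
  then show ?case using f by (auto simp: hom_def Pi_def)
qed

end

locale fgsetup2 = fgsetup M bs D for M :: "('a, 'b) monoid_scheme" (structure) and bs D +
  fixes Sg assumes Sfin: "finite Sg" and Scar: "Sg \<subseteq> carrier M" and gen: "generate M Sg = carrier M"
begin

lemma finite_tors: "finite {t \<in> carrier M. t [^] (int D) = \<one>}"
proof -
  define T where "T = {t \<in> carrier M. t [^] (int D) = \<one>}"
  define rep where "rep t = (SOME n. t = finprod M (\<lambda>s. s [^] (n s :: int)) Sg)" for t
  have rep: "t = finprod M (\<lambda>s. s [^] (rep t s)) Sg" if "t \<in> carrier M" for t
  proof -
    have ex: "\<exists>n. t = finprod M (\<lambda>s. s [^] (n s :: int)) Sg" using gen_repr[OF Scar Sfin, of t] gen that by auto
    show ?thesis unfolding rep_def by (rule someI_ex[OF ex])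
  qed
  define phi where "phi t = (\<lambda>s\<in>Sg. rep t s mod int D)" for t
  have "phi ` T \<subseteq> Sg \<rightarrow>\<^sub>E {0..<int D}" unfolding phi_def using Dpos by auto
  moreover have "finite (Sg \<rightarrow>\<^sub>E {0..<int D})" using Sfin by (intro finite_PiE) auto
  ultimately have fin: "finite (phi ` T)" by (rule finite_subset)
  have "inj_on phi T"
  proof (rule inj_onI)
    fix t1 t2 assume t1: "t1 \<in> T" and t2: "t2 \<in> T" and eq: "phi t1 = phi t2"
    have c1: "t1 \<in> carrier M" and c2: "t2 \<in> carrier M" using t1 t2 by (auto simp: T_def)
    define q where "q s = (rep t1 s - rep t2 s) div int D" for s
    have qs: "rep t1 s = int D * q s + rep t2 s" if s: "s \<in> Sg" for s
    proof -
      have "rep t1 s mod int D = rep t2 s mod int D" using fun_cong[OF eq, of s] s by (simp add: phi_def)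
      then have "int D dvd rep t1 s - rep t2 s" by (simp add: mod_eq_dvd_iff)
      then show ?thesis unfolding q_def by (simp add: dvd_mult_div_cancel)
    qed
    define y where "y = finprod M (\<lambda>s. s [^] q s) Sg"
    have yc: "y \<in> carrier M" unfolding y_def using Scar by (intro finprod_closed) auto
    have "t1 = finprod M (\<lambda>s. s [^] rep t1 s) Sg" by (rule rep[OF c1])
    also have "\<dots> = finprod M (\<lambda>s. s [^] (int D * q s + rep t2 s)) Sg"
      by (intro finprod_cong') (use Scar qs in auto)
    also have "\<dots> = finprod M (\<lambda>s. s [^] (int D * q s)) Sg \<otimes> t2"
      using glin_add[OF Scar, of "\<lambda>s. int D * q s" "rep t2"] rep[OF c2] by simp
    also have "finprod M (\<lambda>s. s [^] (int D * q s)) Sg = y [^] (int D)"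
    proof -
      have "y [^] (int D) = finprod M (\<lambda>s. (s [^] q s) [^] (int D)) Sg"
        unfolding y_def using Scar by (intro finprod_int_pow) auto
      also have "\<dots> = finprod M (\<lambda>s. s [^] (int D * q s)) Sg"
        using Scar by (intro finprod_cong') (auto simp: int_pow_pow mult.commute)
      finally show ?thesis by simp
    qed
    finally have t1e: "t1 = y [^] (int D) \<otimes> t2" .
    have "\<one> = t1 [^] (int D)" using t1 by (simp add: T_def)
    also have "\<dots> = (y [^] (int D)) [^] (int D) \<otimes> t2 [^] (int D)" unfolding t1e using yc c2 by (simp add: int_pow_distrib)
    also have "\<dots> = y [^] (int D * int D)" using t2 yc by (simp add: T_def int_pow_pow)
    finally have "y [^] (int D) = \<one>" using tors_DD[OF yc] by simp
    then show "t1 = t2" using t1e c2 by simp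
  qed
  then show ?thesis using fin unfolding T_def[symmetric] by (simp add: finite_image_iff)
qed

lemma trivial_action_finite_order:
  assumes f: "f \<in> auto M"
    and fb: "\<And>b a. b < kk \<Longrightarrow> a < kk \<Longrightarrow> coordD (f (bs ! b)) a = (if a = b then int D else 0)"
  shows "\<exists>m::nat. m > 0 \<and> f [^]\<^bsub>AutoGroup M\<^esub> m = \<one>\<^bsub>AutoGroup M\<^esub>"
proof -
  have fh: "f \<in> hom M M" using auto_hom[OF f] .
  have fbij: "bij_betw f (carrier M) (carrier M)" using f by (simp add: auto_def Bij_def)
  have FD: "f x [^] (int D * int D) = x [^] (int D * int D)" if "x \<in> carrier M" for x
    by (rule fix_DD[OF fh fb that])
  define T where "T = {t \<in> carrier M. t [^] (int D) = \<one>}"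
  have finT: "finite T" unfolding T_def by (rule finite_tors)
  have imT: "f ` T \<subseteq> T"
  proof
    fix u assume "u \<in> f ` T"
    then obtain t where t: "t \<in> T" "u = f t" by auto
    have tc: "t \<in> carrier M" using t by (simp add: T_def)
    have "f t [^] (int D) = f (t [^] (int D))" using hom_int_pow[OF fh tc is_group is_group] by simp
    also have "\<dots> = \<one>" using t hom_one[OF fh is_group is_group] by (simp add: T_def)
    finally show "u \<in> T" using t hom_closed[OF fh tc] by (simp add: T_def)
  qed
  have injT: "inj_on f T" using bij_betw_imp_inj_on[OF fbij] by (rule inj_on_subset) (auto simp: T_def)
  obtain a where a: "a > 0" "\<And>t. t \<in> T \<Longrightarrow> (f ^^ a) t = t" using perm_pow_id[OF finT injT imT] by blast
  define g where "g = f ^^ a"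
  have gh: "g \<in> hom M M" unfolding g_def by (rule funpow_hom[OF fh])
  have gc: "g x \<in> carrier M" if "x \<in> carrier M" for x using hom_closed[OF gh that] .
  have gDD: "(f ^^ j) x [^] (int D * int D) = x [^] (int D * int D)" if x: "x \<in> carrier M" for x j
  proof (induct j)
    case 0 then show ?case by simp
  next
    case (Suc j)
    have "(f ^^ j) x \<in> carrier M" using hom_closed[OF funpow_hom[OF fh] x] .
    then show ?case using FD Suc by simp
  qed
  have gT: "g t = t" if "t \<in> T" for t using a(2) that unfolding g_def .
  define del where "del x = g x \<otimes> inv x" for x
  have del_c: "del x \<in> carrier M" if "x \<in> carrier M" for x using gc that by (simp add: del_def)
  have del_T: "del x \<in> T" if x: "x \<in> carrier M" for x
  proof -
    have "del x [^] (int D * int D) = g x [^] (int D * int D) \<otimes> inv x [^] (int D * int D)"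
      unfolding del_def using gc[OF x] x by (simp add: int_pow_distrib)
    also have "\<dots> = x [^] (int D * int D) \<otimes> inv (x [^] (int D * int D))"
      using gDD[OF x, of a] x by (simp add: g_def int_pow_inv)
    also have "\<dots> = \<one>" using x by simp
    finally have "del x [^] (int D) = \<one>" by (rule tors_DD[OF del_c[OF x]])
    then show ?thesis using del_c[OF x] by (simp add: T_def)
  qed
  have gx: "g x = x \<otimes> del x" if x: "x \<in> carrier M" for x
    using x gc[OF x] by (simp add: del_def m_lcomm[symmetric] m_assoc[symmetric]) (metis inv_closed m_assoc m_comm r_inv r_one x gc)
  have iter: "(g ^^ j) x = x \<otimes> del x [^] j" if x: "x \<in> carrier M" for x j
  proof (induct j)
    case 0 then show ?case using x by simp
  next
    case (Suc j)
    have dc: "del x \<in> carrier M" using del_c[OF x] .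
    have "(g ^^ Suc j) x = g (x \<otimes> del x [^] j)" using Suc by simp
    also have "\<dots> = g x \<otimes> g (del x) [^] j"
      using gh x dc by (simp add: hom_mult hom_nat_pow[OF gh _ is_group is_group])
    also have "\<dots> = (x \<otimes> del x) \<otimes> del x [^] j" using gx[OF x] gT[OF del_T[OF x]] by simp
    also have "\<dots> = x \<otimes> del x [^] Suc j"
    proof -
      have "del x [^] Suc j = del x [^] j \<otimes> del x" by (rule nat_pow_Suc)
      also have "\<dots> = del x \<otimes> del x [^] j" using dc by (simp add: m_comm)
      finally show ?thesis using x dc by (simp add: m_assoc)
    qed
    finally show ?case .
  qed
  have fid: "(f ^^ (a * D)) x = x" if x: "x \<in> carrier M" for x
  proof -
    have "(f ^^ (a * D)) x = (g ^^ D) x" by (simp add: g_def funpow_mult)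
    also have "\<dots> = x \<otimes> del x [^] D" by (rule iter[OF x])
    also have "del x [^] D = \<one>" using del_T[OF x] by (simp add: T_def int_pow_int)
    finally show ?thesis using x by simp
  qed
  have pc: "f [^]\<^bsub>AutoGroup M\<^esub> (a * D) \<in> auto M"
    using monoid.nat_pow_closed[OF group.is_monoid[OF auto_grp], of f "a * D"] f by (simp add: auto_carrier)
  have "f [^]\<^bsub>AutoGroup M\<^esub> (a * D) = \<one>\<^bsub>AutoGroup M\<^esub>"
    unfolding auto_one
  proof (rule extensionalityI)
    show "f [^]\<^bsub>AutoGroup M\<^esub> (a * D) \<in> extensional (carrier M)"
      using pc by (simp add: auto_def Bij_def)
    show "(\<lambda>x\<in>carrier M. x) \<in> extensional (carrier M)" by simp
    fix x assume x: "x \<in> carrier M"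
    show "(f [^]\<^bsub>AutoGroup M\<^esub> (a * D)) x = (\<lambda>x\<in>carrier M. x) x"
      using auto_pow_apply[OF f x] fid[OF x] x by simp
  qed
  moreover have "a * D > 0" using a(1) Dpos by simp
  ultimately show ?thesis by blast
qed

end

context fgsetup
begin

definition CM :: "('a \<Rightarrow> 'a) \<Rightarrow> complex mat" where
  "CM f = mat kk kk (\<lambda>(a,b). of_int (coordD (f (bs ! b)) a) / of_nat D)"

lemma CM_carrier: "CM f \<in> carrier_mat kk kk"
  by (simp add: CM_def)

lemma CM_int: "intmat kk D (CM f)"
  unfolding intmat_def using Dpos by (auto simp: CM_def)

lemma CM_mult:
  assumes f: "f \<in> auto M" and g: "g \<in> auto M"
  shows "CM (f \<otimes>\<^bsub>AutoGroup M\<^esub> g) = CM f * CM g"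
proof (rule eq_matI)
  fix a b assume a: "a < dim_row (CM f * CM g)" and b: "b < dim_col (CM f * CM g)"
  then have ab: "a < kk" "b < kk" by (auto simp: CM_def)
  define y where "y = g (bs ! b)"
  have yc: "y \<in> carrier M" unfolding y_def using hom_closed[OF auto_hom[OF g] bs_in[OF ab(2)]] .
  have fg: "(f \<otimes>\<^bsub>AutoGroup M\<^esub> g) (bs ! b) = f y"
    using auto_mult[OF f g] bs_in[OF ab(2)] by (simp add: compose_def y_def)
  have Dne: "(of_nat D :: complex) \<noteq> 0" using Dpos by simp
  have "(CM f * CM g) $$ (a,b) = (\<Sum>l\<in>{0..<kk}. (of_int (coordD (f (bs ! l)) a) / of_nat D) * (of_int (coordD y l) / of_nat D))"
    using ab by (simp add: CM_def scalar_prod_def y_def)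
  also have "\<dots> = (\<Sum>l\<in>{0..<kk}. of_int (coordD y l * coordD (f (bs ! l)) a)) / (of_nat D * of_nat D)"
    by (simp add: sum_divide_distrib mult.commute)
  also have "(\<Sum>l\<in>{0..<kk}. (of_int (coordD y l * coordD (f (bs ! l)) a) :: complex)) = of_int (int D * coordD (f y) a)"
    unfolding coord_comp[OF auto_hom[OF f] yc ab(1)] of_int_sum lessThan_atLeast0 ..
  also have "(of_int (int D * coordD (f y) a) :: complex) / (of_nat D * of_nat D) = of_int (coordD (f y) a) / of_nat D"
    using Dne by simp
  also have "\<dots> = CM (f \<otimes>\<^bsub>AutoGroup M\<^esub> g) $$ (a,b)" using ab fg by (simp add: CM_def)
  finally show "CM (f \<otimes>\<^bsub>AutoGroup M\<^esub> g) $$ (a,b) = (CM f * CM g) $$ (a,b)" by simp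
qed (auto simp: CM_def)

lemma CM_one: "CM \<one>\<^bsub>AutoGroup M\<^esub> = 1\<^sub>m kk"
proof (rule eq_matI)
  fix a b assume "a < dim_row (1\<^sub>m kk :: complex mat)" "b < dim_col (1\<^sub>m kk :: complex mat)"
  then have ab: "a < kk" "b < kk" by auto
  have "\<one>\<^bsub>AutoGroup M\<^esub> (bs ! b) = bs ! b" using bs_in[OF ab(2)] by (simp add: auto_one)
  then show "CM \<one>\<^bsub>AutoGroup M\<^esub> $$ (a,b) = 1\<^sub>m kk $$ (a,b)"
    using ab coord_id[OF ab(2) ab(1)] Dpos by (simp add: CM_def)
qed (auto simp: CM_def)

lemma CM_pow:
  assumes f: "f \<in> auto M"
  shows "CM (f [^]\<^bsub>AutoGroup M\<^esub> (m::nat)) = CM f ^\<^sub>m m"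
proof (induct m)
  case 0 then show ?case using CM_one CM_carrier[of f] by simp
next
  case (Suc m)
  have pm: "f [^]\<^bsub>AutoGroup M\<^esub> m \<in> auto M"
    using monoid.nat_pow_closed[OF group.is_monoid[OF auto_grp], of f m] f by (simp add: auto_carrier)
  have "CM (f [^]\<^bsub>AutoGroup M\<^esub> Suc m) = CM (f [^]\<^bsub>AutoGroup M\<^esub> m \<otimes>\<^bsub>AutoGroup M\<^esub> f)" by simp
  also have "\<dots> = CM f ^\<^sub>m m * CM f" using CM_mult[OF pm f] Suc by simp
  finally show ?case by simp
qed

lemma CM_triv:
  assumes "CM f = 1\<^sub>m kk" and ab: "b < kk" "a < kk"
  shows "coordD (f (bs ! b)) a = (if a = b then int D else 0)"
proof -
  have "CM f $$ (a,b) = 1\<^sub>m kk $$ (a,b)" using assms by simp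
  then have "(of_int (coordD (f (bs ! b)) a) :: complex) / of_nat D = (if a = b then 1 else 0)"
    using ab by (simp add: CM_def)
  then have "(of_int (coordD (f (bs ! b)) a) :: complex) = of_int (if a = b then int D else 0)"
    using Dpos by (auto simp: divide_eq_eq)
  then show ?thesis by (simp only: of_int_eq_iff)
qed

end

theorem theorem3p9:
  fixes M :: "('a, 'b) monoid_scheme"
    and z :: "'a \<Rightarrow> 'a"
    and w :: "nat \<Rightarrow> 'a \<Rightarrow> 'a"
    and r :: "nat \<Rightarrow> nat"
  assumes "fin_gen_comm_group M"
    and "z \<in> auto M"
    and "\<And>i. w i \<in> auto M"
    and "filterlim r at_top sequentially"
    and "\<And>i. w i [^]\<^bsub>AutoGroup M\<^esub> r i = z"
  shows "group.ord (AutoGroup M) z \<noteq> 0"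
proof -
  from assms(1) obtain Sg where cg: "comm_group M" and Sfin: "finite Sg" and Scar: "Sg \<subseteq> carrier M"
    and gen: "generate M Sg = carrier M" unfolding fin_gen_comm_group_def by blast
  obtain bs D where fs: "fgsetup M bs D" using comm_group.fg_setup_exists[OF cg Sfin Scar gen] by blast
  have fs2: "fgsetup2 M bs D Sg" by (intro fgsetup2.intro fgsetup2_axioms.intro fs Sfin Scar gen)
  interpret F: fgsetup2 M bs D Sg by (rule fs2)
  let ?A = "AutoGroup M"
  have grp: "group ?A" by (rule F.auto_grp)
  have carA: "carrier ?A = auto M" by (rule F.auto_carrier)
  define S where "S = F.CM ` auto M"
  have zA: "z \<in> carrier ?A" using assms(2) carA by simp
  have "\<exists>m>0. F.CM z ^\<^sub>m m = 1\<^sub>m F.kk"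
  proof (rule matrix_main[of D S F.kk "F.CM z" "F.CM (inv\<^bsub>?A\<^esub> z)" "\<lambda>i. F.CM (w i)" r])
    show "0 < D" by (rule F.Dpos)
    show "\<And>A. A \<in> S \<Longrightarrow> intmat F.kk D A" unfolding S_def using F.CM_int by auto
    show "\<And>A B. A \<in> S \<Longrightarrow> B \<in> S \<Longrightarrow> A * B \<in> S"
    proof -
      fix A B assume "A \<in> S" "B \<in> S"
      then obtain x y where xy: "x \<in> auto M" "y \<in> auto M" "A = F.CM x" "B = F.CM y" unfolding S_def by auto
      have "x \<otimes>\<^bsub>?A\<^esub> y \<in> auto M" using group.subgroup_self[OF grp] xy carA
        by (metis monoid.m_closed group.is_monoid[OF grp])
      moreover have "A * B = F.CM (x \<otimes>\<^bsub>?A\<^esub> y)" using F.CM_mult[OF xy(1,2)] xy by simp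
      ultimately show "A * B \<in> S" unfolding S_def by blast
    qed
    show "1\<^sub>m F.kk \<in> S" unfolding S_def using F.CM_one monoid.one_closed[OF group.is_monoid[OF grp]] carA
      by (metis image_eqI)
    show "F.CM z \<in> S" unfolding S_def using assms(2) by auto
    show "F.CM (inv\<^bsub>?A\<^esub> z) \<in> carrier_mat F.kk F.kk" by (rule F.CM_carrier)
    have izA: "inv\<^bsub>?A\<^esub> z \<in> auto M" using group.inv_closed[OF grp zA] carA by simp
    have "F.CM (inv\<^bsub>?A\<^esub> z) * F.CM z = F.CM (inv\<^bsub>?A\<^esub> z \<otimes>\<^bsub>?A\<^esub> z)" using F.CM_mult[OF izA assms(2)] by simp
    also have "\<dots> = 1\<^sub>m F.kk" using group.l_inv[OF grp zA] F.CM_one by simp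
    finally show "F.CM (inv\<^bsub>?A\<^esub> z) * F.CM z = 1\<^sub>m F.kk" .
    show "\<And>i. F.CM (w i) \<in> S" unfolding S_def using assms(3) by auto
    show "\<And>i. F.CM (w i) ^\<^sub>m r i = F.CM z" using F.CM_pow[OF assms(3)] assms(5) by metis
    show "filterlim r at_top sequentially" by (rule assms(4))
  qed
  then obtain m where m: "m > 0" "F.CM z ^\<^sub>m m = 1\<^sub>m F.kk" by blast
  have zm: "z [^]\<^bsub>?A\<^esub> m \<in> auto M"
    using monoid.nat_pow_closed[OF group.is_monoid[OF grp] zA, of m] carA by simp
  have "F.CM (z [^]\<^bsub>?A\<^esub> m) = 1\<^sub>m F.kk" using F.CM_pow[OF assms(2)] m(2) by simp
  then have "\<exists>a::nat. a > 0 \<and> (z [^]\<^bsub>?A\<^esub> m) [^]\<^bsub>?A\<^esub> a = \<one>\<^bsub>?A\<^esub>"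
    using F.trivial_action_finite_order[OF zm] F.CM_triv by blast
  then obtain a :: nat where a: "a > 0" "(z [^]\<^bsub>?A\<^esub> m) [^]\<^bsub>?A\<^esub> a = \<one>\<^bsub>?A\<^esub>" by blast
  have "z [^]\<^bsub>?A\<^esub> (m * a) = \<one>\<^bsub>?A\<^esub>"
    using a(2) monoid.nat_pow_pow[OF group.is_monoid[OF grp] zA, of m a] by simp
  moreover have "m * a \<noteq> 0" using m(1) a(1) by simp
  ultimately show ?thesis using group.ord_eq_0[OF grp zA] by blast
qed


end
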